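(* Let $\mathbf{C}$ be a category of $\mathbf{FI}$ type. The set of character polynomials on $\mathbf{C}$ is closed under pointwise products (so forms an algebra), and if $P,Q$ are character polynomials of respective degrees $\leq c_1$ and $\leq c_2$, then $P\cdot Q$ is a character polynomial of degree $\leq c_1+c_2$.
   Context: A category $\mathbf{C}$ is of $\mathbf{FI}$ type if: (1) all Hom-sets are finite; (2) every morphism is a monomorphism and every endomorphism is an isomorphism; (3) for all objects $c,d$ the group $G_d=\mathrm{Aut}_{\mathbf{C}}(d)$ acts transitively on $\mathrm{Hom}_{\mathbf{C}}(c,d)$; (4) for every $d$ only finitely many isomorphism classes of $c$ have $\mathrm{Hom}(c,d)\neq\emptyset$; (5) every pair $c_1\to d\leftarrow c_2$ has a pullback, and every pair $f_i:p\to c_i$ has a weak push-out, i.e. a commutative pullback square $g_i:c_i\to d$ such that for every other pullback square $h_i:c_i\to z$ with $h_1f_1=h_2f_2$ there is a unique $h:d\to z$ with $hg_i=h_i$. Write $c\leq d$ if $\mathrm{Hom}(c,d)\neq\emptyset$. Binomial set: $\binom{d}{c}=\mathrm{Hom}(c,d)/G_c$. For a conjugacy class $\mu\subseteq G_c$ (write $|\mu|=c$), $\binom{X}{\mu}$ is the class function on every $G_d$ given by $\sigma\mapsto\#\{[f]\in\binom{d}{c}:\exists\psi\in\mu,\ \sigma f=f\psi\}$. A character polynomial is a $\mathbb{C}$-linear combination of such functions; it has degree $\leq d$ if every $\binom{X}{\mu}$ appearing nontrivially has $|\mu|\leq d$. Write $d\geq c_1+c_2$ if $w\leq d$ for every weak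 push-out object $w$ of any pair $p\to c_1$, $p\to c_2$; degree $\leq c_1+c_2$ means degree $\leq d$ for every $d\geq c_1+c_2$. *)

theory Defs
  imports Complex_Main
begin

text \<open>A (small) category presented concretely: a set of objects, a set of morphisms,
domain/codomain maps, identities and composition (Comp g f = g after f).\<close>

record ('o, 'm) cat =
  Obj  :: "'o set"
  Mor  :: "'m set"
  Dom  :: "'m \<Rightarrow> 'o"
  Cod  :: "'m \<Rightarrow> 'o"
  Id   :: "'o \<Rightarrow> 'm"
  Comp :: "'m \<Rightarrow> 'm \<Rightarrow> 'm"

definition hom :: "('o, 'm) cat \<Rightarrow> 'o \<Rightarrow> 'o \<Rightarrow> 'm set" where
  "hom C c d = {f \<in> Mor C. Dom C f = c \<and> Cod C f = d}"

definition is_category :: "('o, 'm) cat \<Rightarrow> bool" where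
  "is_category C \<longleftrightarrow>
     (\<forall>f \<in> Mor C. Dom C f \<in> Obj C \<and> Cod C f \<in> Obj C) \<and>
     (\<forall>c \<in> Obj C. Id C c \<in> hom C c c) \<and>
     (\<forall>f \<in> Mor C. \<forall>g \<in> Mor C. Dom C g = Cod C f \<longrightarrow>
         Comp C g f \<in> hom C (Dom C f) (Cod C g)) \<and>
     (\<forall>f \<in> Mor C. \<forall>g \<in> Mor C. \<forall>h \<in> Mor C. Dom C g = Cod C f \<longrightarrow> Dom C h = Cod C g \<longrightarrow>
         Comp C h (Comp C g f) = Comp C (Comp C h g) f) \<and>
     (\<forall>f \<in> Mor C. Comp C (Id C (Cod C f)) f = f \<and> Comp C f (Id C (Dom C f)) = f)"

definition is_mono :: "('o, 'm) cat \<Rightarrow> 'm \<Rightarrow> bool" where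
  "is_mono C f \<longleftrightarrow> f \<in> Mor C \<and>
     (\<forall>g \<in> Mor C. \<forall>h \<in> Mor C. Cod C g = Dom C f \<longrightarrow> Cod C h = Dom C f \<longrightarrow> Dom C g = Dom C h \<longrightarrow>
        Comp C f g = Comp C f h \<longrightarrow> g = h)"

definition is_iso :: "('o, 'm) cat \<Rightarrow> 'm \<Rightarrow> bool" where
  "is_iso C f \<longleftrightarrow> f \<in> Mor C \<and> (\<exists>g \<in> hom C (Cod C f) (Dom C f).
      Comp C g f = Id C (Dom C f) \<and> Comp C f g = Id C (Cod C f))"

definition Aut :: "('o, 'm) cat \<Rightarrow> 'o \<Rightarrow> 'm set" where
  "Aut C c = {f \<in> hom C c c. is_iso C f}"

definition obj_iso :: "('o, 'm) cat \<Rightarrow> 'o \<Rightarrow> 'o \<Rightarrow> bool" where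
  "obj_iso C c d \<longleftrightarrow> (\<exists>f \<in> hom C c d. is_iso C f)"

definition obj_le :: "('o, 'm) cat \<Rightarrow> 'o \<Rightarrow> 'o \<Rightarrow> bool" where
  "obj_le C c d \<longleftrightarrow> hom C c d \<noteq> {}"

definition is_pullback :: "('o, 'm) cat \<Rightarrow> 'm \<Rightarrow> 'm \<Rightarrow> 'o \<Rightarrow> 'm \<Rightarrow> 'm \<Rightarrow> bool" where
  "is_pullback C f1 f2 p g1 g2 \<longleftrightarrow>
     f1 \<in> Mor C \<and> f2 \<in> Mor C \<and> Cod C f1 = Cod C f2 \<and> p \<in> Obj C \<and>
     g1 \<in> hom C p (Dom C f1) \<and> g2 \<in> hom C p (Dom C f2) \<and>
     Comp C f1 g1 = Comp C f2 g2 \<and>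
     (\<forall>z \<in> Obj C. \<forall>h1 \<in> hom C z (Dom C f1). \<forall>h2 \<in> hom C z (Dom C f2).
        Comp C f1 h1 = Comp C f2 h2 \<longrightarrow>
        (\<exists>!h. h \<in> hom C z p \<and> Comp C g1 h = h1 \<and> Comp C g2 h = h2))"

definition is_weak_pushout :: "('o, 'm) cat \<Rightarrow> 'm \<Rightarrow> 'm \<Rightarrow> 'o \<Rightarrow> 'm \<Rightarrow> 'm \<Rightarrow> bool" where
  "is_weak_pushout C f1 f2 d g1 g2 \<longleftrightarrow>
     f1 \<in> Mor C \<and> f2 \<in> Mor C \<and> Dom C f1 = Dom C f2 \<and> d \<in> Obj C \<and>
     g1 \<in> hom C (Cod C f1) d \<and> g2 \<in> hom C (Cod C f2) d \<and>
     is_pullback C g1 g2 (Dom C f1) f1 f2 \<and>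
     (\<forall>z \<in> Obj C. \<forall>h1 \<in> hom C (Cod C f1) z. \<forall>h2 \<in> hom C (Cod C f2) z.
        is_pullback C h1 h2 (Dom C f1) f1 f2 \<longrightarrow>
        (\<exists>!h. h \<in> hom C d z \<and> Comp C h g1 = h1 \<and> Comp C h g2 = h2))"

definition FI_type :: "('o, 'm) cat \<Rightarrow> bool" where
  "FI_type C \<longleftrightarrow> is_category C \<and>
     \<comment> \<open>(1) finite Hom-sets\<close>
     (\<forall>c \<in> Obj C. \<forall>d \<in> Obj C. finite (hom C c d)) \<and>
     \<comment> \<open>(2) monomorphisms; endomorphisms are isomorphisms\<close>
     (\<forall>f \<in> Mor C. is_mono C f) \<and>
     (\<forall>c \<in> Obj C. \<forall>f \<in> hom C c c. is_iso C f) \<and>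
     \<comment> \<open>(3) transitivity of the \<open>G_d\<close>-action on \<open>Hom(c,d)\<close>\<close>
     (\<forall>c \<in> Obj C. \<forall>d \<in> Obj C. \<forall>f \<in> hom C c d. \<forall>g \<in> hom C c d.
        \<exists>\<sigma> \<in> Aut C d. Comp C \<sigma> f = g) \<and>
     \<comment> \<open>(4) finitely many isomorphism classes below each object\<close>
     (\<forall>d \<in> Obj C. \<exists>F. finite F \<and> F \<subseteq> Obj C \<and>
        (\<forall>c \<in> Obj C. hom C c d \<noteq> {} \<longrightarrow> (\<exists>c' \<in> F. obj_iso C c c'))) \<and>
     \<comment> \<open>(5) pullbacks and weak push-outs\<close>
     (\<forall>f1 \<in> Mor C. \<forall>f2 \<in> Mor C. Cod C f1 = Cod C f2 \<longrightarrow>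
        (\<exists>p g1 g2. is_pullback C f1 f2 p g1 g2)) \<and>
     (\<forall>f1 \<in> Mor C. \<forall>f2 \<in> Mor C. Dom C f1 = Dom C f2 \<longrightarrow>
        (\<exists>d g1 g2. is_weak_pushout C f1 f2 d g1 g2))"

text \<open>Conjugacy classes: \<open>\<mu> = (c, K)\<close> with \<open>K\<close> a conjugacy class of \<open>G_c\<close>; \<open>|\<mu>| = c\<close>.\<close>
definition conj_class :: "('o, 'm) cat \<Rightarrow> 'o \<times> 'm set \<Rightarrow> bool" where
  "conj_class C \<mu> \<longleftrightarrow> fst \<mu> \<in> Obj C \<and>
     (\<exists>\<tau> \<in> Aut C (fst \<mu>). snd \<mu> =
        {\<kappa> \<in> Aut C (fst \<mu>). \<exists>\<rho> \<in> Aut C (fst \<mu>). Comp C \<kappa> \<rho> = Comp C \<rho> \<tau>})"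

definition binom_set :: "('o, 'm) cat \<Rightarrow> 'o \<Rightarrow> 'o \<Rightarrow> 'm set set" where
  "binom_set C d c = (\<lambda>f. {Comp C f \<psi> | \<psi>. \<psi> \<in> Aut C c}) ` hom C c d"

definition binomX :: "('o, 'm) cat \<Rightarrow> 'o \<times> 'm set \<Rightarrow> 'o \<Rightarrow> 'm \<Rightarrow> complex" where
  "binomX C \<mu> d \<sigma> = of_nat (card {B \<in> binom_set C d (fst \<mu>).
       \<exists>f \<in> B. \<exists>\<psi> \<in> snd \<mu>. Comp C \<sigma> f = Comp C f \<psi>})"

definition char_poly :: "('o, 'm) cat \<Rightarrow> ('o \<Rightarrow> 'm \<Rightarrow> complex) \<Rightarrow> bool" where
  "char_poly C P \<longleftrightarrow> (\<exists>S a. finite S \<and> (\<forall>\<mu> \<in> S. conj_class C \<mu>) \<and>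
     (\<forall>d \<in> Obj C. \<forall>\<sigma> \<in> Aut C d. P d \<sigma> = (\<Sum>\<mu> \<in> S. a \<mu> * binomX C \<mu> d \<sigma>)))"

definition char_poly_deg_le :: "('o, 'm) cat \<Rightarrow> ('o \<Rightarrow> 'm \<Rightarrow> complex) \<Rightarrow> 'o \<Rightarrow> bool" where
  "char_poly_deg_le C P e \<longleftrightarrow> (\<exists>S a. finite S \<and> (\<forall>\<mu> \<in> S. conj_class C \<mu>) \<and>
     (\<forall>\<mu> \<in> S. a \<mu> \<noteq> 0 \<longrightarrow> obj_le C (fst \<mu>) e) \<and>
     (\<forall>d \<in> Obj C. \<forall>\<sigma> \<in> Aut C d. P d \<sigma> = (\<Sum>\<mu> \<in> S. a \<mu> * binomX C \<mu> d \<sigma>)))"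

text \<open>\<open>d \<ge> c1 + c2\<close>: every weak push-out object of any span \<open>c1 \<leftarrow> p \<rightarrow> c2\<close> is \<open>\<le> d\<close>.\<close>
definition geq_sum :: "('o, 'm) cat \<Rightarrow> 'o \<Rightarrow> 'o \<Rightarrow> 'o \<Rightarrow> bool" where
  "geq_sum C d c1 c2 \<longleftrightarrow> d \<in> Obj C \<and>
     (\<forall>p \<in> Obj C. \<forall>f1 \<in> hom C p c1. \<forall>f2 \<in> hom C p c2. \<forall>w g1 g2.
        is_weak_pushout C f1 f2 w g1 g2 \<longrightarrow> obj_le C w d)"

end

theory Submission
  imports Defs
begin

locale fic =
  fixes C :: "('o,'m) cat"
  assumes FI: "FI_type C"
begin

lemma cat: "is_category C" using FI unfolding FI_type_def by blast

lemma mor_obj: "f \<in> Mor C \<Longrightarrow> Dom C f \<in> Obj C \<and> Cod C f \<in> Obj C"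
  using cat unfolding is_category_def by blast

lemma comp_hom0: "f \<in> Mor C \<Longrightarrow> g \<in> Mor C \<Longrightarrow> Dom C g = Cod C f \<Longrightarrow>
   Comp C g f \<in> Mor C \<and> Dom C (Comp C g f) = Dom C f \<and> Cod C (Comp C g f) = Cod C g"
  using cat unfolding is_category_def hom_def by blast

lemma comp_mor[simp]: "f \<in> Mor C \<Longrightarrow> g \<in> Mor C \<Longrightarrow> Dom C g = Cod C f \<Longrightarrow> Comp C g f \<in> Mor C"
  using comp_hom0 by blast
lemma comp_dom[simp]: "f \<in> Mor C \<Longrightarrow> g \<in> Mor C \<Longrightarrow> Dom C g = Cod C f \<Longrightarrow> Dom C (Comp C g f) = Dom C f"
  using comp_hom0 by blast
lemma comp_cod[simp]: "f \<in> Mor C \<Longrightarrow> g \<in> Mor C \<Longrightarrow> Dom C g = Cod C f \<Longrightarrow> Cod C (Comp C g f) = Cod C g"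
  using comp_hom0 by blast

lemma assoc[simp]: "f \<in> Mor C \<Longrightarrow> g \<in> Mor C \<Longrightarrow> h \<in> Mor C \<Longrightarrow> Dom C g = Cod C f \<Longrightarrow> Dom C h = Cod C g \<Longrightarrow>
   Comp C (Comp C h g) f = Comp C h (Comp C g f)"
  using cat unfolding is_category_def by metis

lemma id0: "c \<in> Obj C \<Longrightarrow> Id C c \<in> Mor C \<and> Dom C (Id C c) = c \<and> Cod C (Id C c) = c"
  using cat unfolding is_category_def hom_def by blast
lemma id_mor[simp]: "c \<in> Obj C \<Longrightarrow> Id C c \<in> Mor C" using id0 by blast
lemma id_dom[simp]: "c \<in> Obj C \<Longrightarrow> Dom C (Id C c) = c" using id0 by blast
lemma id_cod[simp]: "c \<in> Obj C \<Longrightarrow> Cod C (Id C c) = c" using id0 by blast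

lemma id_l[simp]: "f \<in> Mor C \<Longrightarrow> Cod C f = c \<Longrightarrow> Comp C (Id C c) f = f"
  using cat unfolding is_category_def by blast
lemma id_r[simp]: "f \<in> Mor C \<Longrightarrow> Dom C f = c \<Longrightarrow> Comp C f (Id C c) = f"
  using cat unfolding is_category_def by blast

lemma mono_iff[simp]: "f \<in> Mor C \<Longrightarrow> g \<in> Mor C \<Longrightarrow> h \<in> Mor C \<Longrightarrow> Cod C g = Dom C f \<Longrightarrow>
   Cod C h = Dom C f \<Longrightarrow> Dom C g = Dom C h \<Longrightarrow> (Comp C f g = Comp C f h) = (g = h)"
  using FI unfolding FI_type_def is_mono_def by blast

lemma hom_iff: "f \<in> hom C a b \<longleftrightarrow> f \<in> Mor C \<and> Dom C f = a \<and> Cod C f = b"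
  by (simp add: hom_def)

lemma hom_finite: "finite (hom C a b)"
proof (cases "a \<in> Obj C \<and> b \<in> Obj C")
  case True then show ?thesis using FI unfolding FI_type_def by blast
next
  case False then have "hom C a b = {}" using mor_obj by (auto simp: hom_def)
  then show ?thesis by simp
qed

lemma endo_iso: "f \<in> Mor C \<Longrightarrow> Dom C f = Cod C f \<Longrightarrow> is_iso C f"
  using FI mor_obj unfolding FI_type_def hom_def by blast

lemma Aut_eq: "Aut C c = hom C c c"
  using endo_iso unfolding Aut_def hom_def by auto

lemma iso_inv: "is_iso C f \<Longrightarrow> \<exists>g. g \<in> Mor C \<and> Dom C g = Cod C f \<and> Cod C g = Dom C f \<and>
   Comp C g f = Id C (Dom C f) \<and> Comp C f g = Id C (Cod C f)"
  unfolding is_iso_def hom_def by blast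

lemma endo_inv: "f \<in> Mor C \<Longrightarrow> Dom C f = c \<Longrightarrow> Cod C f = c \<Longrightarrow>
   \<exists>g. g \<in> Mor C \<and> Dom C g = c \<and> Cod C g = c \<and> Comp C g f = Id C c \<and> Comp C f g = Id C c"
  using iso_inv[OF endo_iso] by fastforce


lemma assoc_eq:
  assumes "Comp C a b = Comp C c e" "a \<in> Mor C" "b \<in> Mor C" "c \<in> Mor C" "e \<in> Mor C" "x \<in> Mor C"
    "Dom C a = Cod C b" "Dom C c = Cod C e" "Dom C b = Cod C x" "Dom C e = Cod C x"
  shows "Comp C a (Comp C b x) = Comp C c (Comp C e x)"
  using assms by (metis assoc)

lemma assoc_id:
  assumes "Comp C a b = Id C c" "a \<in> Mor C" "b \<in> Mor C" "x \<in> Mor C"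
    "Dom C a = Cod C b" "Dom C b = Cod C x" "Cod C x = c"
  shows "Comp C a (Comp C b x) = x"
  using assms by (metis assoc id_l)

lemma assoc_eq3:
  assumes "Comp C a (Comp C b c) = Comp C u (Comp C v t)" "a \<in> Mor C" "b \<in> Mor C" "c \<in> Mor C"
    "u \<in> Mor C" "v \<in> Mor C" "t \<in> Mor C" "x \<in> Mor C"
    "Dom C a = Cod C b" "Dom C b = Cod C c" "Dom C u = Cod C v" "Dom C v = Cod C t" "Dom C c = Cod C x" "Dom C t = Cod C x"
  shows "Comp C a (Comp C b (Comp C c x)) = Comp C u (Comp C v (Comp C t x))"
proof -
  have "Comp C a (Comp C b (Comp C c x)) = Comp C (Comp C a (Comp C b c)) x" using assms(2-) by simp
  also have "\<dots> = Comp C (Comp C u (Comp C v t)) x" using assms(1) by simp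
  also have "\<dots> = Comp C u (Comp C v (Comp C t x))" using assms(2-) by simp
  finally show ?thesis .
qed

lemma conj_rel:
  assumes "conj_class C \<mu>" "\<tau> \<in> snd \<mu>" "\<psi> \<in> snd \<mu>"
  shows "\<exists>\<rho>\<in>hom C (fst \<mu>) (fst \<mu>). Comp C \<psi> \<rho> = Comp C \<rho> \<tau>"
proof -
  define c where "c = fst \<mu>"
  obtain \<tau>0 where t0: "\<tau>0 \<in> hom C c c" and sm: "snd \<mu> = {\<kappa> \<in> hom C c c. \<exists>\<rho> \<in> hom C c c. Comp C \<kappa> \<rho> = Comp C \<rho> \<tau>0}"
    using assms(1) unfolding conj_class_def c_def Aut_eq by blast
  obtain \<rho>0 where r0: "\<rho>0 \<in> hom C c c" "Comp C \<tau> \<rho>0 = Comp C \<rho>0 \<tau>0" and t: "\<tau> \<in> hom C c c"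
    using assms(2) sm by blast
  obtain \<rho>1 where r1: "\<rho>1 \<in> hom C c c" "Comp C \<psi> \<rho>1 = Comp C \<rho>1 \<tau>0" and p: "\<psi> \<in> hom C c c"
    using assms(3) sm by blast
  obtain \<rho>0' where i: "\<rho>0' \<in> Mor C" "Dom C \<rho>0' = c" "Cod C \<rho>0' = c" "Comp C \<rho>0' \<rho>0 = Id C c" "Comp C \<rho>0 \<rho>0' = Id C c"
    using endo_inv r0(1) unfolding hom_iff by blast
  have c: "c \<in> Obj C" using t mor_obj unfolding hom_iff by blast
  have "Comp C \<tau>0 \<rho>0' = Comp C \<rho>0' (Comp C \<rho>0 (Comp C \<tau>0 \<rho>0'))"
    using i t0 r0 c by (simp add: hom_iff flip: assoc)
  also have "\<dots> = Comp C \<rho>0' (Comp C (Comp C \<tau> \<rho>0) \<rho>0')"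
    using i t0 r0 c t by (simp add: hom_iff)
  also have "\<dots> = Comp C \<rho>0' \<tau>"
    using i t0 r0(1) c t by (simp add: hom_iff)
  finally have e: "Comp C \<tau>0 \<rho>0' = Comp C \<rho>0' \<tau>" .
  have "Comp C \<psi> (Comp C \<rho>1 \<rho>0') = Comp C (Comp C \<rho>1 \<rho>0') \<tau>"
  proof -
    have "Comp C \<psi> (Comp C \<rho>1 \<rho>0') = Comp C (Comp C \<psi> \<rho>1) \<rho>0'"
      using i r1(1) p by (simp add: hom_iff)
    also have "\<dots> = Comp C \<rho>1 (Comp C \<tau>0 \<rho>0')" using i r1 p t0 by (simp add: hom_iff)
    also have "\<dots> = Comp C (Comp C \<rho>1 \<rho>0') \<tau>" using i r1 p t0 t e by (simp add: hom_iff)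
    finally show ?thesis .
  qed
  moreover have "Comp C \<rho>1 \<rho>0' \<in> hom C c c" using i r1 by (simp add: hom_iff)
  ultimately show ?thesis unfolding c_def by blast
qed


definition Nc :: "'o \<Rightarrow> 'm \<Rightarrow> 'o \<Rightarrow> 'm \<Rightarrow> nat" where
  "Nc c \<tau> d \<sigma> = card {f \<in> hom C c d. Comp C \<sigma> f = Comp C f \<tau>}"

definition Zc :: "'o \<Rightarrow> 'm \<Rightarrow> 'm set" where
  "Zc c \<tau> = {\<rho> \<in> hom C c c. Comp C \<rho> \<tau> = Comp C \<tau> \<rho>}"

definition orb :: "'o \<Rightarrow> 'm \<Rightarrow> 'm set" where
  "orb c f = {Comp C f \<psi> | \<psi>. \<psi> \<in> Aut C c}"

lemma binom_set_orb: "binom_set C d c = orb c ` hom C c d"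
  unfolding binom_set_def orb_def by simp

lemma orb_mem: "f' \<in> orb c f \<longleftrightarrow> (\<exists>\<psi>\<in>hom C c c. f' = Comp C f \<psi>)"
  unfolding orb_def Aut_eq by blast

lemma orb_self: "f \<in> hom C c d \<Longrightarrow> f \<in> orb c f"
  unfolding orb_mem hom_iff
  by (rule bexI[of _ "Id C c"]) (auto simp: hom_iff dest: mor_obj)

lemma orb_eq: assumes "f \<in> hom C c d" "f' \<in> orb c f" shows "orb c f' = orb c f"
proof -
  obtain \<psi> where p: "\<psi> \<in> hom C c c" "f' = Comp C f \<psi>" using assms orb_mem by blast
  obtain \<psi>' where i: "\<psi>' \<in> Mor C" "Dom C \<psi>' = c" "Cod C \<psi>' = c" "Comp C \<psi>' \<psi> = Id C c" "Comp C \<psi> \<psi>' = Id C c"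
    using endo_inv p(1) unfolding hom_iff by blast
  have c: "c \<in> Obj C" using assms(1) mor_obj unfolding hom_iff by blast
  show ?thesis
  proof (rule set_eqI, rule iffI)
    fix x assume "x \<in> orb c f'"
    then obtain \<chi> where "\<chi> \<in> hom C c c" "x = Comp C f' \<chi>" using orb_mem by blast
    then have "x = Comp C f (Comp C \<psi> \<chi>)" "Comp C \<psi> \<chi> \<in> hom C c c" using p assms(1) by (auto simp: hom_iff)
    then show "x \<in> orb c f" using orb_mem by blast
  next
    fix x assume "x \<in> orb c f"
    then obtain \<chi> where ch: "\<chi> \<in> hom C c c" "x = Comp C f \<chi>" using orb_mem by blast
    have "Comp C f' (Comp C \<psi>' \<chi>) = Comp C f (Comp C (Comp C \<psi> \<psi>') \<chi>)"
      using p assms(1) i ch(1) c by (simp add: hom_iff assoc_id[OF i(5)])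
    also have "\<dots> = x" using i ch assms(1) c by (simp add: hom_iff)
    finally have "x = Comp C f' (Comp C \<psi>' \<chi>)" "Comp C \<psi>' \<chi> \<in> hom C c c" using i ch(1) by (auto simp: hom_iff)
    then show "x \<in> orb c f'" using orb_mem by blast
  qed
qed

lemma conj_snd: "conj_class C \<mu> \<Longrightarrow> snd \<mu> \<subseteq> hom C (fst \<mu>) (fst \<mu>)"
  unfolding conj_class_def Aut_eq by blast

lemma binomX_N:
  assumes mu: "conj_class C \<mu>" and t: "\<tau> \<in> snd \<mu>" and s: "\<sigma> \<in> hom C d d"
  shows "Nc (fst \<mu>) \<tau> d \<sigma> = card (Zc (fst \<mu>) \<tau>) *
     card {B \<in> binom_set C d (fst \<mu>). \<exists>f \<in> B. \<exists>\<psi> \<in> snd \<mu>. Comp C \<sigma> f = Comp C f \<psi>}"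
proof -
  define c where "c = fst \<mu>"
  have th: "\<tau> \<in> hom C c c" using conj_snd[OF mu] t c_def by blast
  define X where "X = {f \<in> hom C c d. Comp C \<sigma> f = Comp C f \<tau>}"
  define good where "good = {B \<in> binom_set C d c. \<exists>f \<in> B. \<exists>\<psi> \<in> snd \<mu>. Comp C \<sigma> f = Comp C f \<psi>}"
  have finX: "finite X" unfolding X_def using hom_finite by simp
  have img: "orb c ` X = good"
  proof
    show "orb c ` X \<subseteq> good"
    proof
      fix B assume "B \<in> orb c ` X"
      then obtain f where f: "f \<in> X" "B = orb c f" by blast
      then show "B \<in> good" unfolding good_def binom_set_orb X_def using orb_self t by blast
    qed
  next
    show "good \<subseteq> orb c ` X"
    proof
      fix B assume "B \<in> good"
      then obtain f0 f \<psi> where B: "f0 \<in> hom C c d" "B = orb c f0" "f \<in> B" "\<psi> \<in> snd \<mu>"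
        and e: "Comp C \<sigma> f = Comp C f \<psi>"
        unfolding good_def binom_set_orb by blast
      have fh: "f \<in> hom C c d" using B orb_mem by (auto simp: hom_iff)
      have ph: "\<psi> \<in> hom C c c" using conj_snd[OF mu] B(4) c_def by blast
      obtain \<rho> where r: "\<rho> \<in> hom C c c" "Comp C \<psi> \<rho> = Comp C \<rho> \<tau>"
        using conj_rel[OF mu t B(4)] c_def by blast
      have "Comp C \<sigma> (Comp C f \<rho>) = Comp C (Comp C f \<rho>) \<tau>"
        using fh r ph s th by (simp add: hom_iff assoc_eq[OF e] r(2))
      moreover have "Comp C f \<rho> \<in> hom C c d" using fh r by (simp add: hom_iff)
      ultimately have "Comp C f \<rho> \<in> X" unfolding X_def by blast
      moreover have "orb c (Comp C f \<rho>) = B"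
        using orb_eq[OF fh, of "Comp C f \<rho>"] orb_mem r(1) orb_eq[OF B(1)] B by metis
      ultimately show "B \<in> orb c ` X" by blast
    qed
  qed
  have fib: "card {x \<in> X. orb c x = orb c f} = card (Zc c \<tau>)" if f: "f \<in> X" for f
  proof -
    have fh: "f \<in> hom C c d" and e: "Comp C \<sigma> f = Comp C f \<tau>" using f X_def by auto
    have "bij_betw (\<lambda>\<rho>. Comp C f \<rho>) (Zc c \<tau>) {x \<in> X. orb c x = orb c f}"
    proof (rule bij_betw_imageI)
      show "inj_on (\<lambda>\<rho>. Comp C f \<rho>) (Zc c \<tau>)"
        by (rule inj_onI) (use fh in \<open>auto simp: Zc_def hom_iff\<close>)
      show "(\<lambda>\<rho>. Comp C f \<rho>) ` Zc c \<tau> = {x \<in> X. orb c x = orb c f}"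
      proof
        show "(\<lambda>\<rho>. Comp C f \<rho>) ` Zc c \<tau> \<subseteq> {x \<in> X. orb c x = orb c f}"
        proof
          fix x assume "x \<in> (\<lambda>\<rho>. Comp C f \<rho>) ` Zc c \<tau>"
          then obtain \<rho> where r: "\<rho> \<in> hom C c c" "Comp C \<rho> \<tau> = Comp C \<tau> \<rho>" "x = Comp C f \<rho>"
            unfolding Zc_def by blast
          have "Comp C \<sigma> x = Comp C x \<tau>"
            using fh r s th by (simp add: hom_iff assoc_eq[OF e])
          moreover have "x \<in> hom C c d" using r fh by (simp add: hom_iff)
          moreover have "orb c x = orb c f" using orb_eq[OF fh] orb_mem r by blast
          ultimately show "x \<in> {x \<in> X. orb c x = orb c f}" unfolding X_def by blast
        qed
      next
        show "{x \<in> X. orb c x = orb c f} \<subseteq> (\<lambda>\<rho>. Comp C f \<rho>) ` Zc c \<tau>"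
        proof
          fix x assume x: "x \<in> {x \<in> X. orb c x = orb c f}"
          then have xh: "x \<in> hom C c d" and ex: "Comp C \<sigma> x = Comp C x \<tau>" and ox: "orb c x = orb c f"
            unfolding X_def by auto
          have "x \<in> orb c f" using ox orb_self[OF xh] by simp
          then obtain \<rho> where r: "\<rho> \<in> hom C c c" "x = Comp C f \<rho>" using orb_mem by blast
          have "Comp C f (Comp C \<tau> \<rho>) = Comp C f (Comp C \<rho> \<tau>)"
          proof -
            have "Comp C f (Comp C \<tau> \<rho>) = Comp C \<sigma> x"
              using fh r s th by (simp add: hom_iff assoc_eq[OF e])
            also have "\<dots> = Comp C x \<tau>" by (rule ex)
            also have "\<dots> = Comp C f (Comp C \<rho> \<tau>)" using fh r th by (simp add: hom_iff)
            finally show ?thesis .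
          qed
          then have "Comp C \<tau> \<rho> = Comp C \<rho> \<tau>" using fh r th by (simp add: hom_iff)
          then have "\<rho> \<in> Zc c \<tau>" using r unfolding Zc_def by simp
          then show "x \<in> (\<lambda>\<rho>. Comp C f \<rho>) ` Zc c \<tau>" using r by blast
        qed
      qed
    qed
    then show ?thesis by (rule bij_betw_same_card[symmetric])
  qed
  have "card X = (\<Sum>B\<in>orb c ` X. card {x \<in> X. orb c x = B})"
    using sum.image_gen[OF finX, of "\<lambda>_. (1::nat)" "orb c"] by simp
  also have "\<dots> = (\<Sum>B\<in>orb c ` X. card (Zc c \<tau>))"
    by (rule sum.cong) (auto simp: fib)
  also have "\<dots> = card good * card (Zc c \<tau>)" using img by simp
  finally show ?thesis unfolding Nc_def X_def good_def c_def by simp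
qed


lemma pb_D:
  assumes "is_pullback C f1 f2 p g1 g2"
  shows "f1 \<in> Mor C" "f2 \<in> Mor C" "Cod C f1 = Cod C f2" "p \<in> Obj C"
    "g1 \<in> Mor C" "Dom C g1 = p" "Cod C g1 = Dom C f1" "g2 \<in> Mor C" "Dom C g2 = p" "Cod C g2 = Dom C f2"
    "Comp C f1 g1 = Comp C f2 g2"
  using assms unfolding is_pullback_def hom_def by auto

lemma pb_U:
  assumes "is_pullback C f1 f2 p g1 g2" "z \<in> Obj C" "h1 \<in> hom C z (Dom C f1)" "h2 \<in> hom C z (Dom C f2)"
    "Comp C f1 h1 = Comp C f2 h2"
  shows "\<exists>!h. h \<in> hom C z p \<and> Comp C g1 h = h1 \<and> Comp C g2 h = h2"
  using assms unfolding is_pullback_def by blast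

lemma pb_mono:
  assumes pb: "is_pullback C g1 g2 p a1 a2" and m: "m \<in> Mor C" "Dom C m = Cod C g1"
  shows "is_pullback C (Comp C m g1) (Comp C m g2) p a1 a2"
proof -
  note D = pb_D[OF pb]
  show ?thesis
    unfolding is_pullback_def
  proof (intro conjI ballI impI)
    show "Comp C m g1 \<in> Mor C" "Comp C m g2 \<in> Mor C" "Cod C (Comp C m g1) = Cod C (Comp C m g2)"
      "p \<in> Obj C" "a1 \<in> hom C p (Dom C (Comp C m g1))" "a2 \<in> hom C p (Dom C (Comp C m g2))"
      "Comp C (Comp C m g1) a1 = Comp C (Comp C m g2) a2"
      using D m by (auto simp: hom_iff)
  next
    fix z h1 h2 assume z: "z \<in> Obj C" and h1: "h1 \<in> hom C z (Dom C (Comp C m g1))"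
      and h2: "h2 \<in> hom C z (Dom C (Comp C m g2))" and e: "Comp C (Comp C m g1) h1 = Comp C (Comp C m g2) h2"
    have "Comp C g1 h1 = Comp C g2 h2" using e D m h1 h2 by (simp add: hom_iff)
    moreover have "h1 \<in> hom C z (Dom C g1)" "h2 \<in> hom C z (Dom C g2)" using h1 h2 D m by auto
    ultimately show "\<exists>!h. h \<in> hom C z p \<and> Comp C a1 h = h1 \<and> Comp C a2 h = h2"
      using pb_U[OF pb z] by blast
  qed
qed

lemma wp_D:
  assumes "is_weak_pushout C f1 f2 d g1 g2"
  shows "f1 \<in> Mor C" "f2 \<in> Mor C" "Dom C f1 = Dom C f2" "d \<in> Obj C"
    "g1 \<in> hom C (Cod C f1) d" "g2 \<in> hom C (Cod C f2) d" "is_pullback C g1 g2 (Dom C f1) f1 f2"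
  using assms unfolding is_weak_pushout_def by auto

lemma wp_U:
  assumes "is_weak_pushout C f1 f2 d g1 g2" "z \<in> Obj C" "h1 \<in> hom C (Cod C f1) z" "h2 \<in> hom C (Cod C f2) z"
    "is_pullback C h1 h2 (Dom C f1) f1 f2"
  shows "\<exists>!h. h \<in> hom C d z \<and> Comp C h g1 = h1 \<and> Comp C h g2 = h2"
  using assms unfolding is_weak_pushout_def by blast

lemma unique_eq: "\<exists>!h. P h \<Longrightarrow> P x \<Longrightarrow> P y \<Longrightarrow> x = y" by blast

definition isopair :: "'o \<Rightarrow> 'o \<Rightarrow> 'm \<Rightarrow> 'm \<Rightarrow> bool" where
  "isopair p q \<phi> \<phi>' \<longleftrightarrow> \<phi> \<in> hom C p q \<and> \<phi>' \<in> hom C q p \<and> Comp C \<phi>' \<phi> = Id C p \<and> Comp C \<phi> \<phi>' = Id C q"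

lemma obj_iso_pair: "obj_iso C p q \<longleftrightarrow> (\<exists>\<phi> \<phi>'. isopair p q \<phi> \<phi>')"
  unfolding obj_iso_def is_iso_def isopair_def hom_def by auto

lemma isopair_sym: "isopair p q \<phi> \<phi>' \<Longrightarrow> isopair q p \<phi>' \<phi>"
  unfolding isopair_def by auto

lemma isopair_obj: "isopair p q \<phi> \<phi>' \<Longrightarrow> p \<in> Obj C \<and> q \<in> Obj C"
  unfolding isopair_def hom_iff using mor_obj by blast

lemma isopair_trans: assumes "isopair p q \<phi> \<phi>'" "isopair q r \<chi> \<chi>'"
  shows "isopair p r (Comp C \<chi> \<phi>) (Comp C \<phi>' \<chi>')"
proof -
  have o: "p \<in> Obj C" "q \<in> Obj C" "r \<in> Obj C" using isopair_obj assms by blast+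
  have a: "\<phi> \<in> Mor C" "Dom C \<phi> = p" "Cod C \<phi> = q" "\<phi>' \<in> Mor C" "Dom C \<phi>' = q" "Cod C \<phi>' = p"
      "\<chi> \<in> Mor C" "Dom C \<chi> = q" "Cod C \<chi> = r" "\<chi>' \<in> Mor C" "Dom C \<chi>' = r" "Cod C \<chi>' = q"
    using assms unfolding isopair_def hom_iff by auto
  have e: "Comp C \<phi>' \<phi> = Id C p" "Comp C \<phi> \<phi>' = Id C q" "Comp C \<chi>' \<chi> = Id C q" "Comp C \<chi> \<chi>' = Id C r"
    using assms unfolding isopair_def by auto
  show ?thesis unfolding isopair_def hom_iff
    using a o by (simp add: assoc_id[OF e(3)] assoc_id[OF e(2)] e(1) e(4))
qed

lemma obj_iso_sym: "obj_iso C p q \<Longrightarrow> obj_iso C q p"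
  using obj_iso_pair isopair_sym by metis
lemma obj_iso_trans: "obj_iso C p q \<Longrightarrow> obj_iso C q r \<Longrightarrow> obj_iso C p r"
  using obj_iso_pair isopair_trans by metis


lemma pb_iso:
  assumes pq: "is_pullback C f1 f2 q b1 b2" and pp: "is_pullback C f1 f2 p a1 a2"
  shows "\<exists>\<phi> \<phi>'. isopair p q \<phi> \<phi>' \<and> a1 = Comp C b1 \<phi> \<and> a2 = Comp C b2 \<phi>"
proof -
  note Dq = pb_D[OF pq] and Dp = pb_D[OF pp]
  obtain \<phi> where ph: "\<phi> \<in> hom C p q" "Comp C b1 \<phi> = a1" "Comp C b2 \<phi> = a2"
    using pb_U[OF pq, of p a1 a2] Dp by (auto simp: hom_iff)
  obtain \<psi> where ps: "\<psi> \<in> hom C q p" "Comp C a1 \<psi> = b1" "Comp C a2 \<psi> = b2"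
    using pb_U[OF pp, of q b1 b2] Dq by (auto simp: hom_iff)
  have u1: "Comp C \<phi> \<psi> = Id C q"
  proof (rule unique_eq[OF pb_U[OF pq, of q b1 b2]])
    show "q \<in> Obj C" "b1 \<in> hom C q (Dom C f1)" "b2 \<in> hom C q (Dom C f2)" "Comp C f1 b1 = Comp C f2 b2"
      using Dq by (auto simp: hom_iff)
    show "Id C q \<in> hom C q q \<and> Comp C b1 (Id C q) = b1 \<and> Comp C b2 (Id C q) = b2"
      using Dq by (auto simp: hom_iff)
    have "Comp C b1 (Comp C \<phi> \<psi>) = b1" "Comp C b2 (Comp C \<phi> \<psi>) = b2"
      using ph ps Dq Dp by (auto simp: hom_iff simp flip: assoc)
    then show "Comp C \<phi> \<psi> \<in> hom C q q \<and> Comp C b1 (Comp C \<phi> \<psi>) = b1 \<and> Comp C b2 (Comp C \<phi> \<psi>) = b2"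
      using ph ps by (auto simp: hom_iff)
  qed
  have u2: "Comp C \<psi> \<phi> = Id C p"
  proof (rule unique_eq[OF pb_U[OF pp, of p a1 a2]])
    show "p \<in> Obj C" "a1 \<in> hom C p (Dom C f1)" "a2 \<in> hom C p (Dom C f2)" "Comp C f1 a1 = Comp C f2 a2"
      using Dp by (auto simp: hom_iff)
    show "Id C p \<in> hom C p p \<and> Comp C a1 (Id C p) = a1 \<and> Comp C a2 (Id C p) = a2"
      using Dp by (auto simp: hom_iff)
    have "Comp C a1 (Comp C \<psi> \<phi>) = a1" "Comp C a2 (Comp C \<psi> \<phi>) = a2"
      using ph ps Dq Dp by (auto simp: hom_iff simp flip: assoc)
    then show "Comp C \<psi> \<phi> \<in> hom C p p \<and> Comp C a1 (Comp C \<psi> \<phi>) = a1 \<and> Comp C a2 (Comp C \<psi> \<phi>) = a2"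
      using ph ps by (auto simp: hom_iff)
  qed
  have "isopair p q \<phi> \<psi>" unfolding isopair_def using ph ps u1 u2 by auto
  then show ?thesis using ph by metis
qed

lemma pb_transport:
  assumes pq: "is_pullback C f1 f2 q b1 b2" and ip: "isopair p q \<phi> \<phi>'"
  shows "is_pullback C f1 f2 p (Comp C b1 \<phi>) (Comp C b2 \<phi>)"
proof -
  note Dq = pb_D[OF pq]
  have a: "\<phi> \<in> Mor C" "Dom C \<phi> = p" "Cod C \<phi> = q" "\<phi>' \<in> Mor C" "Dom C \<phi>' = q" "Cod C \<phi>' = p"
    "Comp C \<phi>' \<phi> = Id C p" "Comp C \<phi> \<phi>' = Id C q"
    using ip unfolding isopair_def hom_iff by auto
  have o: "p \<in> Obj C" "q \<in> Obj C" using isopair_obj[OF ip] by auto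
  show ?thesis
    unfolding is_pullback_def
  proof (intro conjI ballI impI)
    show "f1 \<in> Mor C" "f2 \<in> Mor C" "Cod C f1 = Cod C f2" "p \<in> Obj C"
      "Comp C b1 \<phi> \<in> hom C p (Dom C f1)" "Comp C b2 \<phi> \<in> hom C p (Dom C f2)"
      using Dq a o by (auto simp: hom_iff)
    show "Comp C f1 (Comp C b1 \<phi>) = Comp C f2 (Comp C b2 \<phi>)"
      using Dq a by (simp add: assoc_eq[OF Dq(11)])
  next
    fix z k1 k2 assume z: "z \<in> Obj C" and k1: "k1 \<in> hom C z (Dom C f1)" and k2: "k2 \<in> hom C z (Dom C f2)"
      and e: "Comp C f1 k1 = Comp C f2 k2"
    obtain j where j: "j \<in> hom C z q" "Comp C b1 j = k1" "Comp C b2 j = k2"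
      and ju: "\<And>j'. j' \<in> hom C z q \<Longrightarrow> Comp C b1 j' = k1 \<Longrightarrow> Comp C b2 j' = k2 \<Longrightarrow> j' = j"
      using pb_U[OF pq z k1 k2 e] by metis
    show "\<exists>!h. h \<in> hom C z p \<and> Comp C (Comp C b1 \<phi>) h = k1 \<and> Comp C (Comp C b2 \<phi>) h = k2"
    proof (rule ex1I[of _ "Comp C \<phi>' j"])
      show "Comp C \<phi>' j \<in> hom C z p \<and> Comp C (Comp C b1 \<phi>) (Comp C \<phi>' j) = k1 \<and> Comp C (Comp C b2 \<phi>) (Comp C \<phi>' j) = k2"
        using j a Dq o by (simp add: hom_iff assoc_id[OF a(8)])
    next
      fix h assume h: "h \<in> hom C z p \<and> Comp C (Comp C b1 \<phi>) h = k1 \<and> Comp C (Comp C b2 \<phi>) h = k2"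
      then have hh: "h \<in> Mor C" "Dom C h = z" "Cod C h = p" "Comp C (Comp C b1 \<phi>) h = k1" "Comp C (Comp C b2 \<phi>) h = k2"
        by (auto simp: hom_iff)
      have "Comp C b1 (Comp C \<phi> h) = k1" "Comp C b2 (Comp C \<phi> h) = k2" "Comp C \<phi> h \<in> hom C z q"
        using hh a Dq by (auto simp: hom_iff)
      then have "Comp C \<phi> h = j" using ju by blast
      then have "Comp C \<phi>' (Comp C \<phi> h) = Comp C \<phi>' j" by simp
      then show "h = Comp C \<phi>' j" using h a o by (simp add: hom_iff assoc_id[OF a(7)])
    qed
  qed
qed


lemma legs_card:
  assumes pq: "is_pullback C f1 f2 q b1 b2" and p: "p \<in> Obj C"
  shows "card {x \<in> hom C p (Dom C f1) \<times> hom C p (Dom C f2). is_pullback C f1 f2 p (fst x) (snd x)}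
     = (if obj_iso C p q then card (hom C p p) else 0)"
proof (cases "obj_iso C p q")
  case False
  have "{x \<in> hom C p (Dom C f1) \<times> hom C p (Dom C f2). is_pullback C f1 f2 p (fst x) (snd x)} = {}"
    using pb_iso[OF pq] False obj_iso_pair by blast
  then show ?thesis using False by (simp only: card.empty if_False)
next
  case True
  note Dq = pb_D[OF pq]
  obtain \<phi>0 \<phi>0' where ip: "isopair p q \<phi>0 \<phi>0'" using True obj_iso_pair by blast
  have a: "\<phi>0 \<in> Mor C" "Dom C \<phi>0 = p" "Cod C \<phi>0 = q" "\<phi>0' \<in> Mor C" "Dom C \<phi>0' = q" "Cod C \<phi>0' = p"
    "Comp C \<phi>0' \<phi>0 = Id C p" "Comp C \<phi>0 \<phi>0' = Id C q"
    using ip unfolding isopair_def hom_iff by auto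
  have "bij_betw (\<lambda>\<rho>. (Comp C b1 (Comp C \<phi>0 \<rho>), Comp C b2 (Comp C \<phi>0 \<rho>))) (hom C p p)
      {x \<in> hom C p (Dom C f1) \<times> hom C p (Dom C f2). is_pullback C f1 f2 p (fst x) (snd x)}"
  proof (rule bij_betw_imageI)
    show "inj_on (\<lambda>\<rho>. (Comp C b1 (Comp C \<phi>0 \<rho>), Comp C b2 (Comp C \<phi>0 \<rho>))) (hom C p p)"
      by (rule inj_onI) (use a Dq in \<open>auto simp: hom_iff\<close>)
    show "(\<lambda>\<rho>. (Comp C b1 (Comp C \<phi>0 \<rho>), Comp C b2 (Comp C \<phi>0 \<rho>))) ` hom C p p =
      {x \<in> hom C p (Dom C f1) \<times> hom C p (Dom C f2). is_pullback C f1 f2 p (fst x) (snd x)}"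
    proof
      show "(\<lambda>\<rho>. (Comp C b1 (Comp C \<phi>0 \<rho>), Comp C b2 (Comp C \<phi>0 \<rho>))) ` hom C p p \<subseteq>
        {x \<in> hom C p (Dom C f1) \<times> hom C p (Dom C f2). is_pullback C f1 f2 p (fst x) (snd x)}"
      proof
        fix x assume "x \<in> (\<lambda>\<rho>. (Comp C b1 (Comp C \<phi>0 \<rho>), Comp C b2 (Comp C \<phi>0 \<rho>))) ` hom C p p"
        then obtain \<rho> where r: "\<rho> \<in> hom C p p" "x = (Comp C b1 (Comp C \<phi>0 \<rho>), Comp C b2 (Comp C \<phi>0 \<rho>))" by blast
        obtain \<rho>' where i: "\<rho>' \<in> Mor C" "Dom C \<rho>' = p" "Cod C \<rho>' = p" "Comp C \<rho>' \<rho> = Id C p" "Comp C \<rho> \<rho>' = Id C p"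
          using endo_inv r(1) unfolding hom_iff by blast
        have "isopair p p \<rho> \<rho>'" unfolding isopair_def using i r(1) by (auto simp: hom_iff)
        from isopair_trans[OF this ip] have "is_pullback C f1 f2 p (Comp C b1 (Comp C \<phi>0 \<rho>)) (Comp C b2 (Comp C \<phi>0 \<rho>))"
          by (rule pb_transport[OF pq])
        moreover have "Comp C b1 (Comp C \<phi>0 \<rho>) \<in> hom C p (Dom C f1)" "Comp C b2 (Comp C \<phi>0 \<rho>) \<in> hom C p (Dom C f2)"
          using r a Dq by (auto simp: hom_iff)
        ultimately show "x \<in> {x \<in> hom C p (Dom C f1) \<times> hom C p (Dom C f2). is_pullback C f1 f2 p (fst x) (snd x)}"
          using r by simp
      qed
    next
      show "{x \<in> hom C p (Dom C f1) \<times> hom C p (Dom C f2). is_pullback C f1 f2 p (fst x) (snd x)} \<subseteq>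
        (\<lambda>\<rho>. (Comp C b1 (Comp C \<phi>0 \<rho>), Comp C b2 (Comp C \<phi>0 \<rho>))) ` hom C p p"
      proof
        fix x assume "x \<in> {x \<in> hom C p (Dom C f1) \<times> hom C p (Dom C f2). is_pullback C f1 f2 p (fst x) (snd x)}"
        then have "is_pullback C f1 f2 p (fst x) (snd x)" by simp
        from pb_iso[OF pq this] obtain \<phi> \<phi>' where f: "isopair p q \<phi> \<phi>'" "fst x = Comp C b1 \<phi>" "snd x = Comp C b2 \<phi>"
          by blast
        have fa: "\<phi> \<in> Mor C" "Dom C \<phi> = p" "Cod C \<phi> = q" using f(1) unfolding isopair_def hom_iff by auto
        have "Comp C \<phi>0 (Comp C \<phi>0' \<phi>) = \<phi>" using a fa by (simp add: assoc_id[OF a(8)])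
        moreover have "Comp C \<phi>0' \<phi> \<in> hom C p p" using a fa by (simp add: hom_iff)
        ultimately show "x \<in> (\<lambda>\<rho>. (Comp C b1 (Comp C \<phi>0 \<rho>), Comp C b2 (Comp C \<phi>0 \<rho>))) ` hom C p p"
          using f by (metis (no_types, lifting) image_eqI prod.collapse)
      qed
    qed
  qed
  then show ?thesis using True by (simp add: bij_betw_same_card[symmetric])
qed


definition Hs :: "'o \<Rightarrow> 'm \<Rightarrow> 'm \<Rightarrow> 'm \<Rightarrow> 'm \<Rightarrow> 'o \<Rightarrow> 'm \<Rightarrow> 'm set" where
  "Hs w g1 g2 \<tau>1 \<tau>2 d \<sigma> = {h \<in> hom C w d. Comp C \<sigma> (Comp C h g1) = Comp C (Comp C h g1) \<tau>1 \<and>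
      Comp C \<sigma> (Comp C h g2) = Comp C (Comp C h g2) \<tau>2}"

definition Xs :: "'o \<Rightarrow> 'm \<Rightarrow> 'o \<Rightarrow> 'm \<Rightarrow> 'm set" where
  "Xs c \<tau> d \<sigma> = {f \<in> hom C c d. Comp C \<sigma> f = Comp C f \<tau>}"

lemma wp_bij:
  assumes wp: "is_weak_pushout C a1 a2 w g1 g2" and a: "a1 \<in> hom C p c1" "a2 \<in> hom C p c2"
    and d: "d \<in> Obj C"
  shows "card (Hs w g1 g2 \<tau>1 \<tau>2 d \<sigma>) = card {x \<in> Xs c1 \<tau>1 d \<sigma> \<times> Xs c2 \<tau>2 d \<sigma>. is_pullback C (fst x) (snd x) p a1 a2}"
proof -
  note D = wp_D[OF wp]
  have ah: "a1 \<in> Mor C" "Dom C a1 = p" "Cod C a1 = c1" "a2 \<in> Mor C" "Dom C a2 = p" "Cod C a2 = c2"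
    using a by (auto simp: hom_iff)
  have g: "g1 \<in> Mor C" "Dom C g1 = c1" "Cod C g1 = w" "g2 \<in> Mor C" "Dom C g2 = c2" "Cod C g2 = w"
    using D(5,6) ah by (auto simp: hom_iff)
  have pbg: "is_pullback C g1 g2 p a1 a2" using D(7) ah by simp
  have pbh: "is_pullback C (Comp C h g1) (Comp C h g2) p a1 a2" if "h \<in> hom C w d" for h
    using pb_mono[OF pbg, of h] that g by (auto simp: hom_iff)
  show ?thesis
  proof (rule bij_betw_same_card[of "\<lambda>h. (Comp C h g1, Comp C h g2)"], rule bij_betw_imageI)
    show "inj_on (\<lambda>h. (Comp C h g1, Comp C h g2)) (Hs w g1 g2 \<tau>1 \<tau>2 d \<sigma>)"
    proof (rule inj_onI)
      fix h h' assume h: "h \<in> Hs w g1 g2 \<tau>1 \<tau>2 d \<sigma>" and h': "h' \<in> Hs w g1 g2 \<tau>1 \<tau>2 d \<sigma>"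
        and e: "(Comp C h g1, Comp C h g2) = (Comp C h' g1, Comp C h' g2)"
      have hh: "h \<in> hom C w d" "h' \<in> hom C w d" using h h' Hs_def by auto
      show "h = h'"
      proof (rule unique_eq[OF wp_U[OF wp d, of "Comp C h g1" "Comp C h g2"]])
        show "Comp C h g1 \<in> hom C (Cod C a1) d" "Comp C h g2 \<in> hom C (Cod C a2) d"
          using hh g ah by (auto simp: hom_iff)
        show "is_pullback C (Comp C h g1) (Comp C h g2) (Dom C a1) a1 a2" using pbh hh ah by simp
        show "h \<in> hom C w d \<and> Comp C h g1 = Comp C h g1 \<and> Comp C h g2 = Comp C h g2" using hh by simp
        show "h' \<in> hom C w d \<and> Comp C h' g1 = Comp C h g1 \<and> Comp C h' g2 = Comp C h g2" using hh e by simp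
      qed
    qed
    show "(\<lambda>h. (Comp C h g1, Comp C h g2)) ` Hs w g1 g2 \<tau>1 \<tau>2 d \<sigma> =
      {x \<in> Xs c1 \<tau>1 d \<sigma> \<times> Xs c2 \<tau>2 d \<sigma>. is_pullback C (fst x) (snd x) p a1 a2}"
    proof
      show "(\<lambda>h. (Comp C h g1, Comp C h g2)) ` Hs w g1 g2 \<tau>1 \<tau>2 d \<sigma> \<subseteq>
        {x \<in> Xs c1 \<tau>1 d \<sigma> \<times> Xs c2 \<tau>2 d \<sigma>. is_pullback C (fst x) (snd x) p a1 a2}"
      proof
        fix x assume "x \<in> (\<lambda>h. (Comp C h g1, Comp C h g2)) ` Hs w g1 g2 \<tau>1 \<tau>2 d \<sigma>"
        then obtain h where h: "h \<in> Hs w g1 g2 \<tau>1 \<tau>2 d \<sigma>" "x = (Comp C h g1, Comp C h g2)" by blast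
        have hh: "h \<in> hom C w d" using h Hs_def by auto
        have "Comp C h g1 \<in> hom C c1 d" "Comp C h g2 \<in> hom C c2 d" using hh g by (auto simp: hom_iff)
        then show "x \<in> {x \<in> Xs c1 \<tau>1 d \<sigma> \<times> Xs c2 \<tau>2 d \<sigma>. is_pullback C (fst x) (snd x) p a1 a2}"
          using h pbh[OF hh] unfolding Hs_def Xs_def by auto
      qed
    next
      show "{x \<in> Xs c1 \<tau>1 d \<sigma> \<times> Xs c2 \<tau>2 d \<sigma>. is_pullback C (fst x) (snd x) p a1 a2} \<subseteq>
        (\<lambda>h. (Comp C h g1, Comp C h g2)) ` Hs w g1 g2 \<tau>1 \<tau>2 d \<sigma>"
      proof
        fix x assume x: "x \<in> {x \<in> Xs c1 \<tau>1 d \<sigma> \<times> Xs c2 \<tau>2 d \<sigma>. is_pullback C (fst x) (snd x) p a1 a2}"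
        obtain f1 f2 where xf: "x = (f1, f2)" by fastforce
        have f: "f1 \<in> hom C c1 d" "f2 \<in> hom C c2 d" "Comp C \<sigma> f1 = Comp C f1 \<tau>1" "Comp C \<sigma> f2 = Comp C f2 \<tau>2"
          "is_pullback C f1 f2 p a1 a2" using x xf unfolding Xs_def by auto
        obtain h where h: "h \<in> hom C w d" "Comp C h g1 = f1" "Comp C h g2 = f2"
          using wp_U[OF wp d, of f1 f2] f ah by auto
        have "h \<in> Hs w g1 g2 \<tau>1 \<tau>2 d \<sigma>" unfolding Hs_def using h f by auto
        then show "x \<in> (\<lambda>h. (Comp C h g1, Comp C h g2)) ` Hs w g1 g2 \<tau>1 \<tau>2 d \<sigma>" using h xf by blast
      qed
    qed
  qed
qed

lemma wp_alpha:
  assumes wp: "is_weak_pushout C a1 a2 w g1 g2" and a: "a1 \<in> hom C p c1" "a2 \<in> hom C p c2"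
    and d: "d \<in> Obj C" and s: "\<sigma> \<in> hom C d d" and t: "\<tau>1 \<in> hom C c1 c1" "\<tau>2 \<in> hom C c2 c2"
    and al: "\<alpha> \<in> hom C w w" "Comp C \<alpha> g1 = Comp C g1 \<tau>1" "Comp C \<alpha> g2 = Comp C g2 \<tau>2"
  shows "Hs w g1 g2 \<tau>1 \<tau>2 d \<sigma> = Xs w \<alpha> d \<sigma>"
proof -
  note D = wp_D[OF wp]
  have ah: "a1 \<in> Mor C" "Dom C a1 = p" "Cod C a1 = c1" "a2 \<in> Mor C" "Dom C a2 = p" "Cod C a2 = c2"
    using a by (auto simp: hom_iff)
  have g: "g1 \<in> Mor C" "Dom C g1 = c1" "Cod C g1 = w" "g2 \<in> Mor C" "Dom C g2 = c2" "Cod C g2 = w"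
    using D(5,6) ah by (auto simp: hom_iff)
  have pbg: "is_pullback C g1 g2 p a1 a2" using D(7) ah by simp
  have sh: "\<sigma> \<in> Mor C" "Dom C \<sigma> = d" "Cod C \<sigma> = d" using s by (auto simp: hom_iff)
  have th: "\<tau>1 \<in> Mor C" "Dom C \<tau>1 = c1" "Cod C \<tau>1 = c1" "\<tau>2 \<in> Mor C" "Dom C \<tau>2 = c2" "Cod C \<tau>2 = c2"
    using t by (auto simp: hom_iff)
  have alh: "\<alpha> \<in> Mor C" "Dom C \<alpha> = w" "Cod C \<alpha> = w" using al by (auto simp: hom_iff)
  show ?thesis
  proof (rule set_eqI, rule iffI)
    fix h assume h: "h \<in> Hs w g1 g2 \<tau>1 \<tau>2 d \<sigma>"
    then have hh: "h \<in> Mor C" "Dom C h = w" "Cod C h = d" and c1: "Comp C \<sigma> (Comp C h g1) = Comp C (Comp C h g1) \<tau>1"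
      and c2: "Comp C \<sigma> (Comp C h g2) = Comp C (Comp C h g2) \<tau>2" unfolding Hs_def by (auto simp: hom_iff)
    have "Comp C \<sigma> h = Comp C h \<alpha>"
    proof (rule unique_eq[OF wp_U[OF wp d, of "Comp C \<sigma> (Comp C h g1)" "Comp C \<sigma> (Comp C h g2)"]])
      show "Comp C \<sigma> (Comp C h g1) \<in> hom C (Cod C a1) d" "Comp C \<sigma> (Comp C h g2) \<in> hom C (Cod C a2) d"
        using hh g ah sh by (auto simp: hom_iff)
      show "is_pullback C (Comp C \<sigma> (Comp C h g1)) (Comp C \<sigma> (Comp C h g2)) (Dom C a1) a1 a2"
        using pb_mono[OF pbg, of "Comp C \<sigma> h"] hh g ah sh by simp
      show "Comp C \<sigma> h \<in> hom C w d \<and> Comp C (Comp C \<sigma> h) g1 = Comp C \<sigma> (Comp C h g1) \<and>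
          Comp C (Comp C \<sigma> h) g2 = Comp C \<sigma> (Comp C h g2)"
        using hh g sh by (simp add: hom_iff)
      show "Comp C h \<alpha> \<in> hom C w d \<and> Comp C (Comp C h \<alpha>) g1 = Comp C \<sigma> (Comp C h g1) \<and>
          Comp C (Comp C h \<alpha>) g2 = Comp C \<sigma> (Comp C h g2)"
        using hh g sh alh th c1 c2 by (simp add: hom_iff al(2,3))
    qed
    then show "h \<in> Xs w \<alpha> d \<sigma>" unfolding Xs_def using hh by (simp add: hom_iff)
  next
    fix h assume "h \<in> Xs w \<alpha> d \<sigma>"
    then have hh: "h \<in> Mor C" "Dom C h = w" "Cod C h = d" and e: "Comp C \<sigma> h = Comp C h \<alpha>"
      unfolding Xs_def by (auto simp: hom_iff)
    show "h \<in> Hs w g1 g2 \<tau>1 \<tau>2 d \<sigma>" unfolding Hs_def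
      using hh g sh alh th by (simp add: hom_iff assoc_eq[OF e] al(2,3))
  qed
qed

lemma wp_exalpha:
  assumes wp: "is_weak_pushout C a1 a2 w g1 g2" and a: "a1 \<in> hom C p c1" "a2 \<in> hom C p c2"
    and d: "d \<in> Obj C" and s: "\<sigma> \<in> hom C d d" and t: "\<tau>1 \<in> hom C c1 c1" "\<tau>2 \<in> hom C c2 c2"
    and h: "h \<in> Hs w g1 g2 \<tau>1 \<tau>2 d \<sigma>"
  shows "\<exists>\<alpha>. \<alpha> \<in> hom C w w \<and> Comp C \<alpha> g1 = Comp C g1 \<tau>1 \<and> Comp C \<alpha> g2 = Comp C g2 \<tau>2"
proof -
  note D = wp_D[OF wp]
  have ah: "a1 \<in> Mor C" "Dom C a1 = p" "Cod C a1 = c1" "a2 \<in> Mor C" "Dom C a2 = p" "Cod C a2 = c2"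
    using a by (auto simp: hom_iff)
  have g: "g1 \<in> Mor C" "Dom C g1 = c1" "Cod C g1 = w" "g2 \<in> Mor C" "Dom C g2 = c2" "Cod C g2 = w"
    using D(5,6) ah by (auto simp: hom_iff)
  have pbg: "is_pullback C g1 g2 p a1 a2" using D(7) ah by simp
  note PD = pb_D[OF pbg]
  have sh: "\<sigma> \<in> Mor C" "Dom C \<sigma> = d" "Cod C \<sigma> = d" using s by (auto simp: hom_iff)
  have th: "\<tau>1 \<in> Mor C" "Dom C \<tau>1 = c1" "Cod C \<tau>1 = c1" "\<tau>2 \<in> Mor C" "Dom C \<tau>2 = c2" "Cod C \<tau>2 = c2"
    using t by (auto simp: hom_iff)
  have hh: "h \<in> Mor C" "Dom C h = w" "Cod C h = d" and c1: "Comp C \<sigma> (Comp C h g1) = Comp C (Comp C h g1) \<tau>1"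
      and c2: "Comp C \<sigma> (Comp C h g2) = Comp C (Comp C h g2) \<tau>2" using h unfolding Hs_def by (auto simp: hom_iff)
  have c1': "Comp C h (Comp C g1 \<tau>1) = Comp C \<sigma> (Comp C h g1)" using c1 hh g th by simp
  have c2': "Comp C h (Comp C g2 \<tau>2) = Comp C \<sigma> (Comp C h g2)" using c2 hh g th by simp
  have key: "Comp C h (Comp C g1 (Comp C \<tau>1 k1)) = Comp C \<sigma> (Comp C h (Comp C g1 k1))"
    if "k1 \<in> Mor C" "Cod C k1 = c1" for k1
    using assoc_eq3[OF c1', of k1] that hh g th sh by simp
  have key2: "Comp C h (Comp C g2 (Comp C \<tau>2 k2)) = Comp C \<sigma> (Comp C h (Comp C g2 k2))"
    if "k2 \<in> Mor C" "Cod C k2 = c2" for k2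
    using assoc_eq3[OF c2', of k2] that hh g th sh by simp
  have pb: "is_pullback C (Comp C g1 \<tau>1) (Comp C g2 \<tau>2) p a1 a2"
    unfolding is_pullback_def
  proof (intro conjI ballI impI)
    show "Comp C g1 \<tau>1 \<in> Mor C" "Comp C g2 \<tau>2 \<in> Mor C" "Cod C (Comp C g1 \<tau>1) = Cod C (Comp C g2 \<tau>2)"
      "p \<in> Obj C" "a1 \<in> hom C p (Dom C (Comp C g1 \<tau>1))" "a2 \<in> hom C p (Dom C (Comp C g2 \<tau>2))"
      using g th PD ah by (auto simp: hom_iff)
    have "Comp C h (Comp C g1 (Comp C \<tau>1 a1)) = Comp C h (Comp C g2 (Comp C \<tau>2 a2))"
      using key[of a1] key2[of a2] ah PD(11) by simp
    then show "Comp C (Comp C g1 \<tau>1) a1 = Comp C (Comp C g2 \<tau>2) a2"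
      using hh g th ah by simp
  next
    fix z k1 k2 assume z: "z \<in> Obj C" and k1: "k1 \<in> hom C z (Dom C (Comp C g1 \<tau>1))"
      and k2: "k2 \<in> hom C z (Dom C (Comp C g2 \<tau>2))" and e: "Comp C (Comp C g1 \<tau>1) k1 = Comp C (Comp C g2 \<tau>2) k2"
    have kh: "k1 \<in> Mor C" "Dom C k1 = z" "Cod C k1 = c1" "k2 \<in> Mor C" "Dom C k2 = z" "Cod C k2 = c2"
      using k1 k2 g th by (auto simp: hom_iff)
    have e': "Comp C g1 (Comp C \<tau>1 k1) = Comp C g2 (Comp C \<tau>2 k2)" using e g th kh by simp
    have "Comp C \<sigma> (Comp C h (Comp C g1 k1)) = Comp C \<sigma> (Comp C h (Comp C g2 k2))"
      using key[of k1] key2[of k2] kh e' by simp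
    then have "Comp C g1 k1 = Comp C g2 k2" using sh hh g kh by simp
    moreover have "k1 \<in> hom C z (Dom C g1)" "k2 \<in> hom C z (Dom C g2)" using kh g by (auto simp: hom_iff)
    ultimately show "\<exists>!j. j \<in> hom C z p \<and> Comp C a1 j = k1 \<and> Comp C a2 j = k2"
      using pb_U[OF pbg z] by blast
  qed
  obtain \<alpha> where "\<alpha> \<in> hom C w w" "Comp C \<alpha> g1 = Comp C g1 \<tau>1" "Comp C \<alpha> g2 = Comp C g2 \<tau>2"
    using wp_U[OF wp D(4), of "Comp C g1 \<tau>1" "Comp C g2 \<tau>2"] pb g th ah by (auto simp: hom_iff)
  then show ?thesis by blast
qed


lemma card_filter_sum: "finite A \<Longrightarrow> (of_nat (card {x \<in> A. P x}) :: complex) = (\<Sum>x\<in>A. if P x then 1 else 0)"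
  by (simp add: sum.inter_filter[symmetric])

lemma obj_below: "d \<in> Obj C \<Longrightarrow> \<exists>F. finite F \<and> F \<subseteq> Obj C \<and> (\<forall>c \<in> Obj C. hom C c d \<noteq> {} \<longrightarrow> (\<exists>c' \<in> F. obj_iso C c c'))"
  using FI unfolding FI_type_def by blast

lemma pb_exists: "f1 \<in> Mor C \<Longrightarrow> f2 \<in> Mor C \<Longrightarrow> Cod C f1 = Cod C f2 \<Longrightarrow> \<exists>p g1 g2. is_pullback C f1 f2 p g1 g2"
  using FI unfolding FI_type_def by blast

lemma wp_exists: "f1 \<in> Mor C \<Longrightarrow> f2 \<in> Mor C \<Longrightarrow> Dom C f1 = Dom C f2 \<Longrightarrow> \<exists>d g1 g2. is_weak_pushout C f1 f2 d g1 g2"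
  using FI unfolding FI_type_def by blast

lemma weight_sum:
  assumes F: "finite F" "F \<subseteq> Obj C" and q: "q \<in> Obj C" and ex: "\<exists>c'\<in>F. obj_iso C q c'"
  shows "(\<Sum>p\<in>F. (1 / (of_nat (card (hom C p p)) * of_nat (card {r \<in> F. obj_iso C r p}))) *
      (of_nat (if obj_iso C p q then card (hom C p p) else 0) :: complex)) = 1"
proof -
  define Fq where "Fq = {p \<in> F. obj_iso C p q}"
  have finFq: "finite Fq" using F Fq_def by simp
  have ne: "Fq \<noteq> {}" using ex obj_iso_sym unfolding Fq_def by blast
  have "(\<Sum>p\<in>F. (1 / (of_nat (card (hom C p p)) * of_nat (card {r \<in> F. obj_iso C r p}))) *
      (of_nat (if obj_iso C p q then card (hom C p p) else 0) :: complex)) =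
      (\<Sum>p\<in>F. if obj_iso C p q then 1 / of_nat (card Fq) else 0)"
  proof (rule sum.cong[OF refl])
    fix p assume p: "p \<in> F"
    show "(1 / (of_nat (card (hom C p p)) * of_nat (card {r \<in> F. obj_iso C r p}))) *
      (of_nat (if obj_iso C p q then card (hom C p p) else 0) :: complex) =
      (if obj_iso C p q then 1 / of_nat (card Fq) else 0)"
    proof (cases "obj_iso C p q")
      case True
      have "{r \<in> F. obj_iso C r p} = Fq" unfolding Fq_def
        using True obj_iso_sym obj_iso_trans by blast
      moreover have "card (hom C p p) \<noteq> 0"
      proof -
        have "Id C p \<in> hom C p p" using p F by (auto simp: hom_iff)
        then show ?thesis using hom_finite by (metis card_0_eq empty_iff)
      qed
      ultimately show ?thesis using True by simp
    qed simp
  qed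
  also have "\<dots> = (\<Sum>p\<in>Fq. 1 / of_nat (card Fq))"
    unfolding Fq_def using F by (simp add: sum.inter_filter[symmetric])
  also have "\<dots> = 1" using finFq ne by simp
  finally show ?thesis .
qed

definition WPO :: "'o \<Rightarrow> 'o \<Rightarrow> 'o \<Rightarrow> bool" where
  "WPO c1 c2 w \<longleftrightarrow> (\<exists>p f1 f2 g1 g2. f1 \<in> hom C p c1 \<and> f2 \<in> hom C p c2 \<and> is_weak_pushout C f1 f2 w g1 g2)"

definition clset :: "'o \<Rightarrow> 'm \<Rightarrow> 'm set" where
  "clset w \<alpha> = {\<kappa> \<in> Aut C w. \<exists>\<rho> \<in> Aut C w. Comp C \<kappa> \<rho> = Comp C \<rho> \<alpha>}"

lemma clset_conj: "w \<in> Obj C \<Longrightarrow> \<alpha> \<in> hom C w w \<Longrightarrow> conj_class C (w, clset w \<alpha>) \<and> \<alpha> \<in> clset w \<alpha>"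
proof -
  assume w: "w \<in> Obj C" and a: "\<alpha> \<in> hom C w w"
  have "conj_class C (w, clset w \<alpha>)" unfolding conj_class_def
    using w a by (auto simp: Aut_eq clset_def)
  moreover have "\<alpha> \<in> clset w \<alpha>" unfolding clset_def Aut_eq
    using w a by (auto intro!: bexI[of _ "Id C w"] simp: hom_iff)
  ultimately show ?thesis by blast
qed

lemma N_binom: "w \<in> Obj C \<Longrightarrow> \<alpha> \<in> hom C w w \<Longrightarrow> \<sigma> \<in> hom C d d \<Longrightarrow>
  (of_nat (Nc w \<alpha> d \<sigma>) :: complex) = of_nat (card (Zc w \<alpha>)) * binomX C (w, clset w \<alpha>) d \<sigma>"
  using binomX_N[of "(w, clset w \<alpha>)" \<alpha> \<sigma> d] clset_conj[of w \<alpha>] unfolding binomX_def by simp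


definition wt :: "'o set \<Rightarrow> 'o \<Rightarrow> complex" where
  "wt F p = 1 / (of_nat (card (hom C p p)) * of_nat (card {r \<in> F. obj_iso C r p}))"

lemma count_eq:
  assumes c: "c1 \<in> Obj C" "c2 \<in> Obj C" and d: "d \<in> Obj C" and s: "\<sigma> \<in> hom C d d"
    and F: "finite F" "F \<subseteq> Obj C" "\<forall>c\<in>Obj C. hom C c c1 \<noteq> {} \<longrightarrow> (\<exists>c'\<in>F. obj_iso C c c')"
    and wp: "\<forall>i \<in> Sigma F (\<lambda>p. hom C p c1 \<times> hom C p c2).
       is_weak_pushout C (fst (snd i)) (snd (snd i)) (W i) (G1 i) (G2 i)"
  shows "of_nat (card (Xs c1 \<tau>1 d \<sigma>)) * of_nat (card (Xs c2 \<tau>2 d \<sigma>)) =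
    (\<Sum>i\<in>Sigma F (\<lambda>p. hom C p c1 \<times> hom C p c2). wt F (fst i) * of_nat (card (Hs (W i) (G1 i) (G2 i) \<tau>1 \<tau>2 d \<sigma>)))"
proof -
  define I where "I = Sigma F (\<lambda>p. hom C p c1 \<times> hom C p c2)"
  define Pairs where "Pairs = Xs c1 \<tau>1 d \<sigma> \<times> Xs c2 \<tau>2 d \<sigma>"
  define PB where "PB x i \<longleftrightarrow> is_pullback C (fst x) (snd x) (fst i) (fst (snd i)) (snd (snd i))" for x i
  have finX: "finite (Xs c \<tau> d \<sigma>)" for c \<tau> unfolding Xs_def using hom_finite by simp
  have finP: "finite Pairs" unfolding Pairs_def using finX by simp
  have finI: "finite I" unfolding I_def using F(1) hom_finite by (simp add: finite_SigmaI)
  have "(\<Sum>i\<in>I. wt F (fst i) * of_nat (card (Hs (W i) (G1 i) (G2 i) \<tau>1 \<tau>2 d \<sigma>))) =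
      (\<Sum>i\<in>I. wt F (fst i) * of_nat (card {x \<in> Pairs. PB x i}))"
  proof (rule sum.cong[OF refl])
    fix i assume i: "i \<in> I"
    obtain p a1 a2 where ip: "i = (p, a1, a2)" by (cases i) auto
    have a: "a1 \<in> hom C p c1" "a2 \<in> hom C p c2" using i ip I_def by auto
    have "is_weak_pushout C a1 a2 (W i) (G1 i) (G2 i)" using wp i ip I_def by auto
    from wp_bij[OF this a d, of \<tau>1 \<tau>2 \<sigma>] show "wt F (fst i) * of_nat (card (Hs (W i) (G1 i) (G2 i) \<tau>1 \<tau>2 d \<sigma>)) =
      wt F (fst i) * of_nat (card {x \<in> Pairs. PB x i})" unfolding Pairs_def PB_def ip by simp
  qed
  also have "\<dots> = (\<Sum>i\<in>I. \<Sum>x\<in>Pairs. wt F (fst i) * (if PB x i then 1 else 0))"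
    by (simp add: card_filter_sum[OF finP] sum_distrib_left)
  also have "\<dots> = (\<Sum>x\<in>Pairs. \<Sum>i\<in>I. wt F (fst i) * (if PB x i then 1 else 0))"
    by (rule sum.swap)
  also have "\<dots> = (\<Sum>x\<in>Pairs. 1)"
  proof (rule sum.cong[OF refl])
    fix x assume x: "x \<in> Pairs"
    obtain f1 f2 where xf: "x = (f1, f2)" by fastforce
    have f: "f1 \<in> hom C c1 d" "f2 \<in> hom C c2 d" using x xf Pairs_def Xs_def by auto
    obtain q b1 b2 where pq: "is_pullback C f1 f2 q b1 b2" using pb_exists[of f1 f2] f by (auto simp: hom_iff)
    note Dq = pb_D[OF pq]
    have df: "Dom C f1 = c1" "Dom C f2 = c2" using f by (auto simp: hom_iff)
    have exq: "\<exists>c'\<in>F. obj_iso C q c'"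
    proof -
      have "b1 \<in> hom C q c1" using Dq df by (auto simp: hom_iff)
      then show ?thesis using F(3) Dq(4) by blast
    qed
    have "(\<Sum>i\<in>I. wt F (fst i) * (if PB x i then 1 else 0)) =
        (\<Sum>p\<in>F. \<Sum>y\<in>hom C p c1 \<times> hom C p c2. wt F p * (if is_pullback C f1 f2 p (fst y) (snd y) then 1 else 0))"
      unfolding I_def PB_def xf using F(1) hom_finite
      by (subst sum.Sigma) (auto simp: case_prod_beta)
    also have "\<dots> = (\<Sum>p\<in>F. wt F p * of_nat (card {y \<in> hom C p (Dom C f1) \<times> hom C p (Dom C f2). is_pullback C f1 f2 p (fst y) (snd y)}))"
      using hom_finite by (simp add: card_filter_sum sum_distrib_left df)
    also have "\<dots> = (\<Sum>p\<in>F. wt F p * of_nat (if obj_iso C p q then card (hom C p p) else 0))"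
      using legs_card[OF pq] F(2) by (intro sum.cong) auto
    also have "\<dots> = 1" using weight_sum[OF F(1,2) Dq(4) exq] unfolding wt_def by simp
    finally show "(\<Sum>i\<in>I. wt F (fst i) * (if PB x i then 1 else 0)) = 1" .
  qed
  also have "\<dots> = of_nat (card (Xs c1 \<tau>1 d \<sigma>)) * of_nat (card (Xs c2 \<tau>2 d \<sigma>))"
    unfolding Pairs_def by (simp add: card_cartesian_product)
  finally show ?thesis unfolding I_def by simp
qed


lemma prod_N:
  assumes c: "c1 \<in> Obj C" "c2 \<in> Obj C" and t: "\<tau>1 \<in> hom C c1 c1" "\<tau>2 \<in> hom C c2 c2"
  shows "\<exists>(I :: ('o \<times> 'm \<times> 'm) set) k \<nu>. finite I \<and> (\<forall>i\<in>I. conj_class C (\<nu> i) \<and> WPO c1 c2 (fst (\<nu> i))) \<and>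
    (\<forall>d\<in>Obj C. \<forall>\<sigma>\<in>hom C d d. of_nat (Nc c1 \<tau>1 d \<sigma>) * of_nat (Nc c2 \<tau>2 d \<sigma>) = (\<Sum>i\<in>I. k i * binomX C (\<nu> i) d \<sigma>))"
proof -
  obtain F where F: "finite F" "F \<subseteq> Obj C" "\<forall>c\<in>Obj C. hom C c c1 \<noteq> {} \<longrightarrow> (\<exists>c'\<in>F. obj_iso C c c')"
    using obj_below[OF c(1)] by blast
  define I0 where "I0 = Sigma F (\<lambda>p. hom C p c1 \<times> hom C p c2)"
  define wpo where "wpo i = (SOME t. is_weak_pushout C (fst (snd i)) (snd (snd i)) (fst t) (fst (snd t)) (snd (snd t)))"
    for i :: "'o \<times> 'm \<times> 'm"
  define W where "W i = fst (wpo i)" for i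
  define G1 where "G1 i = fst (snd (wpo i))" for i
  define G2 where "G2 i = snd (snd (wpo i))" for i
  have wp: "\<forall>i \<in> I0. is_weak_pushout C (fst (snd i)) (snd (snd i)) (W i) (G1 i) (G2 i)"
  proof
    fix i assume i: "i \<in> I0"
    then have "fst (snd i) \<in> Mor C" "snd (snd i) \<in> Mor C" "Dom C (fst (snd i)) = Dom C (snd (snd i))"
      unfolding I0_def by (auto simp: hom_iff)
    from wp_exists[OF this] obtain w g1 g2 where "is_weak_pushout C (fst (snd i)) (snd (snd i)) w g1 g2" by blast
    then have "(\<lambda>t. is_weak_pushout C (fst (snd i)) (snd (snd i)) (fst t) (fst (snd t)) (snd (snd t))) (w, g1, g2)"
      by simp
    then have "(\<lambda>t. is_weak_pushout C (fst (snd i)) (snd (snd i)) (fst t) (fst (snd t)) (snd (snd t))) (wpo i)"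
      unfolding wpo_def by (rule someI)
    then have "is_weak_pushout C (fst (snd i)) (snd (snd i)) (fst (wpo i)) (fst (snd (wpo i))) (snd (snd (wpo i)))"
      by simp
    then show "is_weak_pushout C (fst (snd i)) (snd (snd i)) (W i) (G1 i) (G2 i)"
      unfolding W_def G1_def G2_def .
  qed
  define HasA where "HasA i \<longleftrightarrow> (\<exists>\<alpha>. \<alpha> \<in> hom C (W i) (W i) \<and> Comp C \<alpha> (G1 i) = Comp C (G1 i) \<tau>1 \<and> Comp C \<alpha> (G2 i) = Comp C (G2 i) \<tau>2)" for i
  define A where "A i = (SOME \<alpha>. \<alpha> \<in> hom C (W i) (W i) \<and> Comp C \<alpha> (G1 i) = Comp C (G1 i) \<tau>1 \<and> Comp C \<alpha> (G2 i) = Comp C (G2 i) \<tau>2)" for i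
  have A: "A i \<in> hom C (W i) (W i) \<and> Comp C (A i) (G1 i) = Comp C (G1 i) \<tau>1 \<and> Comp C (A i) (G2 i) = Comp C (G2 i) \<tau>2"
    if "HasA i" for i
    using that unfolding HasA_def A_def by (rule someI_ex)
  define I where "I = {i \<in> I0. HasA i}"
  define \<nu> where "\<nu> i = (W i, clset (W i) (A i))" for i
  define k where "k i = wt F (fst i) * of_nat (card (Zc (W i) (A i)))" for i
  have finI0: "finite I0" unfolding I0_def using F(1) hom_finite by (simp add: finite_SigmaI)
  have Wobj: "W i \<in> Obj C" if "i \<in> I0" for i using wp_D(4) wp that by blast
  have "finite I" unfolding I_def using finI0 by simp
  moreover have "\<forall>i\<in>I. conj_class C (\<nu> i) \<and> WPO c1 c2 (fst (\<nu> i))"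
  proof
    fix i assume i: "i \<in> I"
    then have i0: "i \<in> I0" and e: "HasA i" unfolding I_def by auto
    have "conj_class C (\<nu> i)" unfolding \<nu>_def using clset_conj[OF Wobj[OF i0]] A[OF e] by blast
    moreover have "WPO c1 c2 (fst (\<nu> i))" unfolding WPO_def \<nu>_def
      using wp i0 unfolding I0_def by fastforce
    ultimately show "conj_class C (\<nu> i) \<and> WPO c1 c2 (fst (\<nu> i))" by blast
  qed
  moreover have "\<forall>d\<in>Obj C. \<forall>\<sigma>\<in>hom C d d. of_nat (Nc c1 \<tau>1 d \<sigma>) * of_nat (Nc c2 \<tau>2 d \<sigma>) = (\<Sum>i\<in>I. k i * binomX C (\<nu> i) d \<sigma>)"
  proof (intro ballI)
    fix d \<sigma> assume d: "d \<in> Obj C" and s: "\<sigma> \<in> hom C d d"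
    have "of_nat (Nc c1 \<tau>1 d \<sigma>) * of_nat (Nc c2 \<tau>2 d \<sigma>) =
        (\<Sum>i\<in>I0. wt F (fst i) * of_nat (card (Hs (W i) (G1 i) (G2 i) \<tau>1 \<tau>2 d \<sigma>)))"
      using count_eq[OF c d s F wp[unfolded I0_def], of \<tau>1 \<tau>2] unfolding Nc_def Xs_def I0_def by simp
    also have "\<dots> = (\<Sum>i\<in>I. wt F (fst i) * of_nat (card (Hs (W i) (G1 i) (G2 i) \<tau>1 \<tau>2 d \<sigma>)))"
    proof (rule sum.mono_neutral_right[OF finI0])
      show "I \<subseteq> I0" unfolding I_def by blast
      show "\<forall>i\<in>I0 - I. wt F (fst i) * of_nat (card (Hs (W i) (G1 i) (G2 i) \<tau>1 \<tau>2 d \<sigma>)) = 0"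
      proof
        fix i assume i: "i \<in> I0 - I"
        then have i0: "i \<in> I0" and ne: "\<not> HasA i" unfolding I_def by auto
        have a: "fst (snd i) \<in> hom C (fst i) c1" "snd (snd i) \<in> hom C (fst i) c2" using i0 I0_def by auto
        have "Hs (W i) (G1 i) (G2 i) \<tau>1 \<tau>2 d \<sigma> = {}"
          using wp_exalpha[OF wp[rule_format, OF i0] a d s t] ne unfolding HasA_def by blast
        then show "wt F (fst i) * of_nat (card (Hs (W i) (G1 i) (G2 i) \<tau>1 \<tau>2 d \<sigma>)) = 0" by simp
      qed
    qed
    also have "\<dots> = (\<Sum>i\<in>I. k i * binomX C (\<nu> i) d \<sigma>)"
    proof (rule sum.cong[OF refl])
      fix i assume i: "i \<in> I"
      then have i0: "i \<in> I0" and e: "HasA i" unfolding I_def by auto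
      have a: "fst (snd i) \<in> hom C (fst i) c1" "snd (snd i) \<in> hom C (fst i) c2" using i0 I0_def by auto
      note Ai = A[OF e]
      have "Hs (W i) (G1 i) (G2 i) \<tau>1 \<tau>2 d \<sigma> = Xs (W i) (A i) d \<sigma>"
        using wp_alpha[OF wp[rule_format, OF i0] a d s t] Ai by blast
      then have "card (Hs (W i) (G1 i) (G2 i) \<tau>1 \<tau>2 d \<sigma>) = Nc (W i) (A i) d \<sigma>" unfolding Nc_def Xs_def by simp
      then show "wt F (fst i) * of_nat (card (Hs (W i) (G1 i) (G2 i) \<tau>1 \<tau>2 d \<sigma>)) = k i * binomX C (\<nu> i) d \<sigma>"
        using N_binom[OF Wobj[OF i0] conjunct1[OF Ai] s] unfolding k_def \<nu>_def by simp
    qed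
    finally show "of_nat (Nc c1 \<tau>1 d \<sigma>) * of_nat (Nc c2 \<tau>2 d \<sigma>) = (\<Sum>i\<in>I. k i * binomX C (\<nu> i) d \<sigma>)" .
  qed
  ultimately show ?thesis by blast
qed


definition combo :: "('o \<Rightarrow> bool) \<Rightarrow> ('o \<Rightarrow> 'm \<Rightarrow> complex) \<Rightarrow> bool" where
  "combo \<Phi> P \<longleftrightarrow> (\<exists>S a. finite S \<and> (\<forall>\<mu>\<in>S. conj_class C \<mu> \<and> \<Phi> (fst \<mu>)) \<and>
     (\<forall>d \<in> Obj C. \<forall>\<sigma> \<in> Aut C d. P d \<sigma> = (\<Sum>\<mu> \<in> S. a \<mu> * binomX C \<mu> d \<sigma>)))"

lemma combo_idx:
  assumes "finite I" "\<forall>i\<in>I. conj_class C (\<nu> i) \<and> \<Phi> (fst (\<nu> i))"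
    "\<forall>d\<in>Obj C. \<forall>\<sigma>\<in>Aut C d. P d \<sigma> = (\<Sum>i\<in>I. k i * binomX C (\<nu> i) d \<sigma>)"
  shows "combo \<Phi> P"
  unfolding combo_def
proof (intro exI conjI)
  show "finite (\<nu> ` I)" using assms(1) by simp
  show "\<forall>\<mu>\<in>\<nu> ` I. conj_class C \<mu> \<and> \<Phi> (fst \<mu>)" using assms(2) by blast
  show "\<forall>d\<in>Obj C. \<forall>\<sigma>\<in>Aut C d. P d \<sigma> = (\<Sum>\<mu>\<in>\<nu> ` I. (\<Sum>i\<in>{i \<in> I. \<nu> i = \<mu>}. k i) * binomX C \<mu> d \<sigma>)"
  proof (intro ballI)
    fix d \<sigma> assume "d \<in> Obj C" "\<sigma> \<in> Aut C d"
    then have "P d \<sigma> = (\<Sum>i\<in>I. k i * binomX C (\<nu> i) d \<sigma>)" using assms(3) by blast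
    also have "\<dots> = (\<Sum>\<mu>\<in>\<nu> ` I. \<Sum>i\<in>{i \<in> I. \<nu> i = \<mu>}. k i * binomX C (\<nu> i) d \<sigma>)"
      by (rule sum.image_gen[OF assms(1)])
    also have "\<dots> = (\<Sum>\<mu>\<in>\<nu> ` I. (\<Sum>i\<in>{i \<in> I. \<nu> i = \<mu>}. k i) * binomX C \<mu> d \<sigma>)"
      by (rule sum.cong[OF refl]) (simp add: sum_distrib_right)
    finally show "P d \<sigma> = (\<Sum>\<mu>\<in>\<nu> ` I. (\<Sum>i\<in>{i \<in> I. \<nu> i = \<mu>}. k i) * binomX C \<mu> d \<sigma>)" .
  qed
qed

lemma binom_prod:
  assumes m1: "conj_class C \<mu>1" and m2: "conj_class C \<mu>2"
  shows "\<exists>(I :: ('o \<times> 'm \<times> 'm) set) k \<nu>. finite I \<and> (\<forall>i\<in>I. conj_class C (\<nu> i) \<and> WPO (fst \<mu>1) (fst \<mu>2) (fst (\<nu> i))) \<and>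
    (\<forall>d\<in>Obj C. \<forall>\<sigma>\<in>Aut C d. binomX C \<mu>1 d \<sigma> * binomX C \<mu>2 d \<sigma> = (\<Sum>i\<in>I. k i * binomX C (\<nu> i) d \<sigma>))"
proof -
  have ex: "\<exists>\<tau>. \<tau> \<in> snd \<mu>" if m: "conj_class C \<mu>" for \<mu>
  proof -
    obtain \<tau> where t: "\<tau> \<in> hom C (fst \<mu>) (fst \<mu>)" and e: "snd \<mu> = {\<kappa> \<in> hom C (fst \<mu>) (fst \<mu>). \<exists>\<rho> \<in> hom C (fst \<mu>) (fst \<mu>). Comp C \<kappa> \<rho> = Comp C \<rho> \<tau>}"
      using m unfolding conj_class_def Aut_eq by blast
    have "fst \<mu> \<in> Obj C" using m conj_class_def by blast
    then have "\<tau> \<in> snd \<mu>" using t unfolding e by (auto intro!: bexI[of _ "Id C (fst \<mu>)"] simp: hom_iff)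
    then show ?thesis by blast
  qed
  obtain \<tau>1 \<tau>2 where t: "\<tau>1 \<in> snd \<mu>1" "\<tau>2 \<in> snd \<mu>2" using ex m1 m2 by blast
  have th: "\<tau>1 \<in> hom C (fst \<mu>1) (fst \<mu>1)" "\<tau>2 \<in> hom C (fst \<mu>2) (fst \<mu>2)" using conj_snd m1 m2 t by blast+
  have c: "fst \<mu>1 \<in> Obj C" "fst \<mu>2 \<in> Obj C" using m1 m2 conj_class_def by blast+
  have zc: "card (Zc c \<tau>) \<noteq> 0" if "c \<in> Obj C" "\<tau> \<in> hom C c c" for c \<tau>
  proof -
    have "Id C c \<in> Zc c \<tau>" using that unfolding Zc_def by (auto simp: hom_iff)
    moreover have "finite (Zc c \<tau>)" unfolding Zc_def using hom_finite by simp
    ultimately show ?thesis by (metis card_0_eq empty_iff)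
  qed
  obtain I k \<nu> where P: "finite (I :: ('o \<times> 'm \<times> 'm) set)" "\<forall>i\<in>I. conj_class C (\<nu> i) \<and> WPO (fst \<mu>1) (fst \<mu>2) (fst (\<nu> i))"
    "\<forall>d\<in>Obj C. \<forall>\<sigma>\<in>hom C d d. of_nat (Nc (fst \<mu>1) \<tau>1 d \<sigma>) * of_nat (Nc (fst \<mu>2) \<tau>2 d \<sigma>) = (\<Sum>i\<in>I. k i * binomX C (\<nu> i) d \<sigma>)"
    using prod_N[OF c th] by blast
  define z where "z = (of_nat (card (Zc (fst \<mu>1) \<tau>1)) * of_nat (card (Zc (fst \<mu>2) \<tau>2)) :: complex)"
  have zne: "z \<noteq> 0" unfolding z_def using zc c th by simp
  show ?thesis
  proof (intro exI conjI)
    show "finite I" "\<forall>i\<in>I. conj_class C (\<nu> i) \<and> WPO (fst \<mu>1) (fst \<mu>2) (fst (\<nu> i))" using P by auto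
    show "\<forall>d\<in>Obj C. \<forall>\<sigma>\<in>Aut C d. binomX C \<mu>1 d \<sigma> * binomX C \<mu>2 d \<sigma> = (\<Sum>i\<in>I. (k i / z) * binomX C (\<nu> i) d \<sigma>)"
    proof (intro ballI)
      fix d \<sigma> assume d: "d \<in> Obj C" and s: "\<sigma> \<in> Aut C d"
      have s': "\<sigma> \<in> hom C d d" using s Aut_eq by simp
      have "z * (binomX C \<mu>1 d \<sigma> * binomX C \<mu>2 d \<sigma>) = of_nat (Nc (fst \<mu>1) \<tau>1 d \<sigma>) * of_nat (Nc (fst \<mu>2) \<tau>2 d \<sigma>)"
        using binomX_N[OF m1 t(1) s'] binomX_N[OF m2 t(2) s'] unfolding z_def binomX_def by simp
      also have "\<dots> = (\<Sum>i\<in>I. k i * binomX C (\<nu> i) d \<sigma>)" using P(3) d s' by blast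
      finally have "z * (binomX C \<mu>1 d \<sigma> * binomX C \<mu>2 d \<sigma>) = (\<Sum>i\<in>I. k i * binomX C (\<nu> i) d \<sigma>)" .
      then show "binomX C \<mu>1 d \<sigma> * binomX C \<mu>2 d \<sigma> = (\<Sum>i\<in>I. (k i / z) * binomX C (\<nu> i) d \<sigma>)"
        using zne by (simp add: sum_divide_distrib[symmetric] field_simps)
    qed
  qed
qed

lemma combo_prod:
  assumes P: "combo \<Phi>1 P" and Q: "combo \<Phi>2 Q"
    and H: "\<And>\<mu>1 \<mu>2 w. conj_class C \<mu>1 \<Longrightarrow> conj_class C \<mu>2 \<Longrightarrow> \<Phi>1 (fst \<mu>1) \<Longrightarrow> \<Phi>2 (fst \<mu>2) \<Longrightarrow> WPO (fst \<mu>1) (fst \<mu>2) w \<Longrightarrow> \<Psi> w"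
  shows "combo \<Psi> (\<lambda>d \<sigma>. P d \<sigma> * Q d \<sigma>)"
proof -
  obtain S1 a1 where S1: "finite S1" "\<forall>\<mu>\<in>S1. conj_class C \<mu> \<and> \<Phi>1 (fst \<mu>)"
    "\<forall>d \<in> Obj C. \<forall>\<sigma> \<in> Aut C d. P d \<sigma> = (\<Sum>\<mu> \<in> S1. a1 \<mu> * binomX C \<mu> d \<sigma>)"
    using P unfolding combo_def by blast
  obtain S2 a2 where S2: "finite S2" "\<forall>\<mu>\<in>S2. conj_class C \<mu> \<and> \<Phi>2 (fst \<mu>)"
    "\<forall>d \<in> Obj C. \<forall>\<sigma> \<in> Aut C d. Q d \<sigma> = (\<Sum>\<mu> \<in> S2. a2 \<mu> * binomX C \<mu> d \<sigma>)"
    using Q unfolding combo_def by blast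
  define R where "R x t \<longleftrightarrow> finite (fst t) \<and> (\<forall>i\<in>fst t. conj_class C (snd (snd t) i) \<and> WPO (fst (fst x)) (fst (snd x)) (fst (snd (snd t) i))) \<and>
    (\<forall>d\<in>Obj C. \<forall>\<sigma>\<in>Aut C d. binomX C (fst x) d \<sigma> * binomX C (snd x) d \<sigma> = (\<Sum>i\<in>fst t. fst (snd t) i * binomX C (snd (snd t) i) d \<sigma>))"
    for x :: "('o \<times> 'm set) \<times> ('o \<times> 'm set)" and t :: "('o \<times> 'm \<times> 'm) set \<times> (('o \<times> 'm \<times> 'm) \<Rightarrow> complex) \<times> (('o \<times> 'm \<times> 'm) \<Rightarrow> ('o \<times> 'm set))"
  have "\<forall>x\<in>S1 \<times> S2. \<exists>t. R x t"
  proof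
    fix x assume x: "x \<in> S1 \<times> S2"
    then have "conj_class C (fst x)" "conj_class C (snd x)" using S1 S2 by auto
    from binom_prod[OF this] obtain I k \<nu> where "finite (I :: ('o \<times> 'm \<times> 'm) set)" "\<forall>i\<in>I. conj_class C (\<nu> i) \<and> WPO (fst (fst x)) (fst (snd x)) (fst (\<nu> i))"
      "\<forall>d\<in>Obj C. \<forall>\<sigma>\<in>Aut C d. binomX C (fst x) d \<sigma> * binomX C (snd x) d \<sigma> = (\<Sum>i\<in>I. k i * binomX C (\<nu> i) d \<sigma>)"
      by blast
    then have "R x (I, k, \<nu>)" unfolding R_def by simp
    then show "\<exists>t. R x t" by blast
  qed
  then obtain T where T: "\<forall>x\<in>S1 \<times> S2. R x (T x)" by (metis bchoice)
  define J where "J = Sigma (S1 \<times> S2) (\<lambda>x. fst (T x))"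
  have finJ: "finite J" unfolding J_def using S1(1) S2(1) T R_def by (intro finite_SigmaI) auto
  show ?thesis
  proof (rule combo_idx[OF finJ, where \<nu> = "\<lambda>y. snd (snd (T (fst y))) (snd y)"
        and k = "\<lambda>y. a1 (fst (fst y)) * a2 (snd (fst y)) * fst (snd (T (fst y))) (snd y)"])
    show "\<forall>y\<in>J. conj_class C (snd (snd (T (fst y))) (snd y)) \<and> \<Psi> (fst (snd (snd (T (fst y))) (snd y)))"
    proof
      fix y assume y: "y \<in> J"
      then have x: "fst y \<in> S1 \<times> S2" and i: "snd y \<in> fst (T (fst y))" unfolding J_def by auto
      have Rx: "R (fst y) (T (fst y))" using bspec[OF T x] .
      have "conj_class C (snd (snd (T (fst y))) (snd y))" "WPO (fst (fst (fst y))) (fst (snd (fst y))) (fst (snd (snd (T (fst y))) (snd y)))"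
        using Rx i unfolding R_def by auto
      moreover have "conj_class C (fst (fst y))" "conj_class C (snd (fst y))" "\<Phi>1 (fst (fst (fst y)))" "\<Phi>2 (fst (snd (fst y)))"
        using x S1(2) S2(2) by auto
      ultimately show "conj_class C (snd (snd (T (fst y))) (snd y)) \<and> \<Psi> (fst (snd (snd (T (fst y))) (snd y)))"
        using H by blast
    qed
    show "\<forall>d\<in>Obj C. \<forall>\<sigma>\<in>Aut C d. P d \<sigma> * Q d \<sigma> = (\<Sum>y\<in>J. a1 (fst (fst y)) * a2 (snd (fst y)) * fst (snd (T (fst y))) (snd y) * binomX C (snd (snd (T (fst y))) (snd y)) d \<sigma>)"
    proof (intro ballI)
      fix d \<sigma> assume d: "d \<in> Obj C" and s: "\<sigma> \<in> Aut C d"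
      have "P d \<sigma> * Q d \<sigma> = (\<Sum>\<mu>1\<in>S1. \<Sum>\<mu>2\<in>S2. a1 \<mu>1 * a2 \<mu>2 * (binomX C \<mu>1 d \<sigma> * binomX C \<mu>2 d \<sigma>))"
        using S1(3) S2(3) d s by (simp add: sum_product algebra_simps)
      also have "\<dots> = (\<Sum>x\<in>S1 \<times> S2. a1 (fst x) * a2 (snd x) * (binomX C (fst x) d \<sigma> * binomX C (snd x) d \<sigma>))"
        by (simp add: sum.cartesian_product case_prod_beta)
      also have "\<dots> = (\<Sum>x\<in>S1 \<times> S2. \<Sum>i\<in>fst (T x). a1 (fst x) * a2 (snd x) * fst (snd (T x)) i * binomX C (snd (snd (T x)) i) d \<sigma>)"
      proof (rule sum.cong[OF refl])
        fix x assume x: "x \<in> S1 \<times> S2"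
        then have "binomX C (fst x) d \<sigma> * binomX C (snd x) d \<sigma> = (\<Sum>i\<in>fst (T x). fst (snd (T x)) i * binomX C (snd (snd (T x)) i) d \<sigma>)"
          using bspec[OF T x] d s unfolding R_def by blast
        then show "a1 (fst x) * a2 (snd x) * (binomX C (fst x) d \<sigma> * binomX C (snd x) d \<sigma>) =
          (\<Sum>i\<in>fst (T x). a1 (fst x) * a2 (snd x) * fst (snd (T x)) i * binomX C (snd (snd (T x)) i) d \<sigma>)"
          by (simp add: sum_distrib_left mult.assoc)
      qed
      also have "\<dots> = (\<Sum>y\<in>J. a1 (fst (fst y)) * a2 (snd (fst y)) * fst (snd (T (fst y))) (snd y) * binomX C (snd (snd (T (fst y))) (snd y)) d \<sigma>)"
        unfolding J_def using S1(1) S2(1) T R_def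
        by (subst sum.Sigma) (auto simp: case_prod_beta)
      finally show "P d \<sigma> * Q d \<sigma> = (\<Sum>y\<in>J. a1 (fst (fst y)) * a2 (snd (fst y)) * fst (snd (T (fst y))) (snd y) * binomX C (snd (snd (T (fst y))) (snd y)) d \<sigma>)" .
    qed
  qed
qed


lemma wpo_le:
  assumes geq: "geq_sum C d c1 c2" and u1: "obj_le C c1' c1" and u2: "obj_le C c2' c2" and W: "WPO c1' c2' w"
  shows "obj_le C w d"
proof -
  obtain p f1 f2 g1 g2 where f: "f1 \<in> hom C p c1'" "f2 \<in> hom C p c2'" and wp: "is_weak_pushout C f1 f2 w g1 g2"
    using W unfolding WPO_def by blast
  obtain v1 v2 where v: "v1 \<in> hom C c1' c1" "v2 \<in> hom C c2' c2" using u1 u2 unfolding obj_le_def by blast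
  have fh: "f1 \<in> Mor C" "Dom C f1 = p" "Cod C f1 = c1'" "f2 \<in> Mor C" "Dom C f2 = p" "Cod C f2 = c2'"
    using f by (auto simp: hom_iff)
  have vh: "v1 \<in> Mor C" "Dom C v1 = c1'" "Cod C v1 = c1" "v2 \<in> Mor C" "Dom C v2 = c2'" "Cod C v2 = c2"
    using v by (auto simp: hom_iff)
  have p: "p \<in> Obj C" using mor_obj[OF fh(1)] fh(2) by simp
  have "Comp C v1 f1 \<in> Mor C" "Comp C v2 f2 \<in> Mor C" "Dom C (Comp C v1 f1) = Dom C (Comp C v2 f2)"
    using fh vh by simp_all
  then obtain w' G1 G2 where wp': "is_weak_pushout C (Comp C v1 f1) (Comp C v2 f2) w' G1 G2"
    using wp_exists by blast
  have "Comp C v1 f1 \<in> hom C p c1" "Comp C v2 f2 \<in> hom C p c2" using fh vh by (auto simp: hom_iff)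
  note hh = this
  have "\<forall>p\<in>Obj C. \<forall>f1\<in>hom C p c1. \<forall>f2\<in>hom C p c2. \<forall>w g1 g2. is_weak_pushout C f1 f2 w g1 g2 \<longrightarrow> obj_le C w d"
    using geq unfolding geq_sum_def by (rule conjunct2)
  from this[rule_format, OF p hh wp'] have le': "obj_le C w' d" .
  note D' = wp_D[OF wp']
  have Gh: "G1 \<in> Mor C" "Dom C G1 = c1" "Cod C G1 = w'" "G2 \<in> Mor C" "Dom C G2 = c2" "Cod C G2 = w'"
    using D'(5,6) fh vh by (auto simp: hom_iff)
  have pbG: "is_pullback C G1 G2 p (Comp C v1 f1) (Comp C v2 f2)" using D'(7) fh vh by simp
  note PD = pb_D[OF pbG]
  have pb: "is_pullback C (Comp C G1 v1) (Comp C G2 v2) p f1 f2"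
    unfolding is_pullback_def
  proof (intro conjI ballI impI)
    show "Comp C G1 v1 \<in> Mor C" "Comp C G2 v2 \<in> Mor C" "Cod C (Comp C G1 v1) = Cod C (Comp C G2 v2)" "p \<in> Obj C"
      "f1 \<in> hom C p (Dom C (Comp C G1 v1))" "f2 \<in> hom C p (Dom C (Comp C G2 v2))"
      using Gh vh fh p by (auto simp: hom_iff)
    show "Comp C (Comp C G1 v1) f1 = Comp C (Comp C G2 v2) f2" using PD(11) Gh vh fh by simp
  next
    fix z k1 k2 assume z: "z \<in> Obj C" and k1: "k1 \<in> hom C z (Dom C (Comp C G1 v1))"
      and k2: "k2 \<in> hom C z (Dom C (Comp C G2 v2))" and e: "Comp C (Comp C G1 v1) k1 = Comp C (Comp C G2 v2) k2"
    have kh: "k1 \<in> Mor C" "Dom C k1 = z" "Cod C k1 = c1'" "k2 \<in> Mor C" "Dom C k2 = z" "Cod C k2 = c2'"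
      using k1 k2 Gh vh by (auto simp: hom_iff)
    have "Comp C v1 k1 \<in> hom C z (Dom C G1)" "Comp C v2 k2 \<in> hom C z (Dom C G2)"
      "Comp C G1 (Comp C v1 k1) = Comp C G2 (Comp C v2 k2)"
      using kh vh Gh e by (auto simp: hom_iff)
    from pb_U[OF pbG z this]
    have u: "\<exists>!j. j \<in> hom C z p \<and> Comp C (Comp C v1 f1) j = Comp C v1 k1 \<and> Comp C (Comp C v2 f2) j = Comp C v2 k2" .
    have eq: "(j \<in> hom C z p \<and> Comp C (Comp C v1 f1) j = Comp C v1 k1 \<and> Comp C (Comp C v2 f2) j = Comp C v2 k2) =
       (j \<in> hom C z p \<and> Comp C f1 j = k1 \<and> Comp C f2 j = k2)" for j
    proof (cases "j \<in> hom C z p")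
      case True
      then have jh: "j \<in> Mor C" "Dom C j = z" "Cod C j = p" by (auto simp: hom_iff)
      show ?thesis using vh fh kh jh True by simp
    qed simp
    show "\<exists>!j. j \<in> hom C z p \<and> Comp C f1 j = k1 \<and> Comp C f2 j = k2"
      using u unfolding eq .
  qed
  have "Comp C G1 v1 \<in> hom C (Cod C f1) w'" "Comp C G2 v2 \<in> hom C (Cod C f2) w'"
    using fh Gh vh by (simp_all add: hom_iff)
  from wp_U[OF wp D'(4) this] pb fh obtain h where "h \<in> hom C w w'" by (metis (no_types, lifting))
  moreover obtain h' where "h' \<in> hom C w' d" using le' unfolding obj_le_def by blast
  ultimately have "Comp C h' h \<in> hom C w d" by (simp add: hom_iff)
  then show ?thesis unfolding obj_le_def by blast
qed

lemma char_poly_combo: "char_poly C P \<longleftrightarrow> combo (\<lambda>_. True) P"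
  unfolding char_poly_def combo_def by simp

lemma deg_combo: assumes "char_poly_deg_le C P e" shows "combo (\<lambda>x. obj_le C x e) P"
proof -
  obtain S a where S: "finite S" "\<forall>\<mu>\<in>S. conj_class C \<mu>" "\<forall>\<mu>\<in>S. a \<mu> \<noteq> 0 \<longrightarrow> obj_le C (fst \<mu>) e"
    "\<forall>d\<in>Obj C. \<forall>\<sigma>\<in>Aut C d. P d \<sigma> = (\<Sum>\<mu>\<in>S. a \<mu> * binomX C \<mu> d \<sigma>)"
    using assms unfolding char_poly_deg_le_def by blast
  show ?thesis unfolding combo_def
  proof (intro exI conjI)
    show "finite {\<mu>\<in>S. a \<mu> \<noteq> 0}" using S(1) by simp
    show "\<forall>\<mu>\<in>{\<mu>\<in>S. a \<mu> \<noteq> 0}. conj_class C \<mu> \<and> obj_le C (fst \<mu>) e" using S(2,3) by blast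
    show "\<forall>d\<in>Obj C. \<forall>\<sigma>\<in>Aut C d. P d \<sigma> = (\<Sum>\<mu>\<in>{\<mu>\<in>S. a \<mu> \<noteq> 0}. a \<mu> * binomX C \<mu> d \<sigma>)"
    proof (intro ballI)
      fix d \<sigma> assume "d \<in> Obj C" "\<sigma> \<in> Aut C d"
      then have "P d \<sigma> = (\<Sum>\<mu>\<in>S. a \<mu> * binomX C \<mu> d \<sigma>)" using S(4) by blast
      also have "\<dots> = (\<Sum>\<mu>\<in>{\<mu>\<in>S. a \<mu> \<noteq> 0}. a \<mu> * binomX C \<mu> d \<sigma>)"
        by (rule sum.mono_neutral_right[OF S(1)]) auto
      finally show "P d \<sigma> = (\<Sum>\<mu>\<in>{\<mu>\<in>S. a \<mu> \<noteq> 0}. a \<mu> * binomX C \<mu> d \<sigma>)" .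
    qed
  qed
qed

lemma combo_deg: assumes "combo (\<lambda>x. obj_le C x e) P" shows "char_poly_deg_le C P e"
  using assms unfolding combo_def char_poly_deg_le_def by blast

end

theorem mainTheorem8:
  fixes C :: "('o, 'm) cat"
    and P Q :: "'o \<Rightarrow> 'm \<Rightarrow> complex"
  assumes "FI_type C"
  shows "(char_poly C P \<longrightarrow> char_poly C Q \<longrightarrow> char_poly C (\<lambda>d \<sigma>. P d \<sigma> * Q d \<sigma>)) \<and>
         (\<forall>c1 \<in> Obj C. \<forall>c2 \<in> Obj C.
            char_poly_deg_le C P c1 \<longrightarrow> char_poly_deg_le C Q c2 \<longrightarrow>
            (\<forall>d. geq_sum C d c1 c2 \<longrightarrow> char_poly_deg_le C (\<lambda>d \<sigma>. P d \<sigma> * Q d \<sigma>) d))"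
proof -
  interpret fic C using assms by unfold_locales
  have A: "char_poly C P \<longrightarrow> char_poly C Q \<longrightarrow> char_poly C (\<lambda>d \<sigma>. P d \<sigma> * Q d \<sigma>)"
    unfolding char_poly_combo using combo_prod[of "\<lambda>_. True" P "\<lambda>_. True" Q "\<lambda>_. True"] by simp
  have B: "char_poly_deg_le C (\<lambda>d \<sigma>. P d \<sigma> * Q d \<sigma>) d"
    if "char_poly_deg_le C P c1" "char_poly_deg_le C Q c2" "geq_sum C d c1 c2" for c1 c2 d
  proof (rule combo_deg, rule combo_prod[OF deg_combo[OF that(1)] deg_combo[OF that(2)]])
    fix \<mu>1 \<mu>2 w assume "obj_le C (fst \<mu>1) c1" "obj_le C (fst \<mu>2) c2" "WPO (fst \<mu>1) (fst \<mu>2) w"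
    then show "obj_le C w d" using wpo_le[OF that(3)] by blast
  qed
  show ?thesis using A B by blast
qed

end
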